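(* Let $R$ be a principal ideal domain and let $f=\sum_i f_iX^i\in R[X]$. Then $f$ is irreducible in $R[[X]]$ if and only if one of the following conditions holds: (1) $f_0=0$ and $f_1$ is a unit in $R$; (2) $f_0$ is associate in $R$ to $\pi^m$ for some prime element $\pi\in R$ and some integer $m\ge 1$, and whenever $f=gh$ with $g,h\in\widehat{R}_{(\pi)}[X]$, either $g_0$ or $h_0$ is a unit in $\widehat{R}_{(\pi)}$.
   Context: For a polynomial or power series $f$, $f_i$ denotes the coefficient of $X^i$. A nonzero element $a$ of a ring is prime if $(a)$ is a prime ideal. For an ideal $\mathfrak a$ of a ring $R$, $\widehat{R}_{\mathfrak a}=\varprojlim R/\mathfrak a^n$ denotes the $\mathfrak a$-adic completion; thus $\widehat{R}_{(\pi)}$ is the $\pi$-adic completion of $R$, and $R[X]\subseteq \widehat{R}_{(\pi)}[X]$ via the canonical map. *)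

theory Defs
  imports "HOL-Computational_Algebra.Computational_Algebra"
begin

definition pid_ring :: "'a::idom itself \<Rightarrow> bool" where
  "pid_ring _ \<longleftrightarrow>
     (\<forall>I::'a set. 0 \<in> I \<and> (\<forall>x\<in>I. \<forall>y\<in>I. x + y \<in> I) \<and> (\<forall>x\<in>I. \<forall>r. r * x \<in> I)
        \<longrightarrow> (\<exists>a. I = {r * a | r. True}))"

text \<open>Elements of the pi-adic completion, i.e. of the inverse limit of the R/(pi^n), are
  represented by sequences of lifts x n in R (x n represents the component in R/(pi^n))
  which are compatible under the projection maps.  Two such sequences represent the same
  element iff pi^n divides x n - y n for all n; ring operations are componentwise.\<close>
definition padic_compat :: "'a::comm_ring_1 \<Rightarrow> (nat \<Rightarrow> 'a) \<Rightarrow> bool" where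
  "padic_compat p x \<longleftrightarrow> (\<forall>n m. n \<le> m \<longrightarrow> p ^ n dvd (x m - x n))"

definition padic_unit :: "'a::comm_ring_1 \<Rightarrow> (nat \<Rightarrow> 'a) \<Rightarrow> bool" where
  "padic_unit p x \<longleftrightarrow> (\<exists>y. padic_compat p y \<and> (\<forall>n. p ^ n dvd (x n * y n - 1)))"

text \<open>A polynomial over the completion, represented by a sequence of polynomials over R
  of bounded degree whose coefficient sequences are compatible (g n is the reduction mod pi^n).\<close>
definition padic_poly :: "'a::comm_ring_1 \<Rightarrow> (nat \<Rightarrow> 'a poly) \<Rightarrow> bool" where
  "padic_poly p g \<longleftrightarrow> (\<exists>d. \<forall>n. degree (g n) \<le> d) \<and> (\<forall>i. padic_compat p (\<lambda>n. coeff (g n) i))"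

text \<open>f = g * h holds in the polynomial ring over the completion (f embedded canonically).\<close>
definition padic_poly_factors :: "'a::comm_ring_1 \<Rightarrow> 'a poly \<Rightarrow> (nat \<Rightarrow> 'a poly) \<Rightarrow> (nat \<Rightarrow> 'a poly) \<Rightarrow> bool" where
  "padic_poly_factors p f g h \<longleftrightarrow> (\<forall>n i. p ^ n dvd coeff (f - g n * h n) i)"

end

theory Submission
  imports Defs
begin

definition fcong :: "'a::comm_ring_1 \<Rightarrow> 'a fps \<Rightarrow> 'a fps \<Rightarrow> bool" where
  "fcong q A B \<longleftrightarrow> (\<forall>i. q dvd (A - B) $ i)"

lemma fcong_refl[simp]: "fcong q A A" by (simp add: fcong_def)

lemma fcong_sym: "fcong q A B \<Longrightarrow> fcong q B A"
  unfolding fcong_def by (metis dvd_minus_iff fps_sub_nth minus_diff_eq)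

lemma fcong_trans: "fcong q A B \<Longrightarrow> fcong q B C \<Longrightarrow> fcong q A C"
proof (unfold fcong_def, intro allI)
  fix i assume "\<forall>i. q dvd (A - B) $ i" "\<forall>i. q dvd (B - C) $ i"
  then have "q dvd (A $ i - B $ i) + (B $ i - C $ i)" by (intro dvd_add) auto
  moreover have "(A $ i - B $ i) + (B $ i - C $ i) = (A - C) $ i" by simp
  ultimately show "q dvd (A - C) $ i" by metis
qed

lemma fcong_add: "fcong q A B \<Longrightarrow> fcong q C D \<Longrightarrow> fcong q (A + C) (B + D)"
proof (unfold fcong_def, intro allI)
  fix i assume "\<forall>i. q dvd (A - B) $ i" "\<forall>i. q dvd (C - D) $ i"
  then have "q dvd (A - B) $ i + (C - D) $ i" by simp
  then show "q dvd (A + C - (B + D)) $ i" by (simp add: algebra_simps)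
qed

lemma fcong_diff: "fcong q A B \<Longrightarrow> fcong q C D \<Longrightarrow> fcong q (A - C) (B - D)"
proof (unfold fcong_def, intro allI)
  fix i assume "\<forall>i. q dvd (A - B) $ i" "\<forall>i. q dvd (C - D) $ i"
  then have "q dvd (A - B) $ i - (C - D) $ i" by simp
  then show "q dvd (A - C - (B - D)) $ i" by (simp add: algebra_simps)
qed

lemma dvd_all_mult: fixes C :: "'a::comm_ring_1 fps" shows "(\<forall>i. q dvd C $ i) \<Longrightarrow> q dvd (C * D) $ n"
  by (simp add: fps_mult_nth dvd_sum dvd_mult2)

lemma dvd_all_mult2: fixes C :: "'a::comm_ring_1 fps" shows "(\<forall>i. q dvd C $ i) \<Longrightarrow> q dvd (D * C) $ n"
  using dvd_all_mult[of q C D n] by (simp add: mult.commute[of D C])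

lemma fcong_mult: "fcong q A B \<Longrightarrow> fcong q C D \<Longrightarrow> fcong q (A * C) (B * D)"
proof (unfold fcong_def, intro allI)
  fix i assume 1: "\<forall>i. q dvd (A - B) $ i" and 2: "\<forall>i. q dvd (C - D) $ i"
  have "A * C - B * D = (A - B) * C + B * (C - D)" by (simp add: algebra_simps)
  moreover have "q dvd ((A - B) * C) $ i" using 1 by (rule dvd_all_mult)
  moreover have "q dvd (B * (C - D)) $ i" using 2 by (rule dvd_all_mult2)
  ultimately show "q dvd (A * C - B * D) $ i" by simp
qed

lemma fcong_dvd: "q' dvd q \<Longrightarrow> fcong q A B \<Longrightarrow> fcong q' A B"
  unfolding fcong_def using dvd_trans by blast

lemma fcong_1[simp]: "fcong 1 A B" by (simp add: fcong_def)

lemma fcong_zero_iff: "fcong q A 0 \<longleftrightarrow> (\<forall>i. q dvd A $ i)"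
  by (simp add: fcong_def)

lemma fcong_scale: "fcong q A 0 \<Longrightarrow> fcong (r * q) (fps_const r * A) 0"
  by (simp add: fcong_def mult_dvd_mono)

lemma fcong_eq_diff: "fcong q A B \<longleftrightarrow> fcong q (A - B) 0"
  by (simp add: fcong_def)


lemma canc: fixes x :: "'a::idom" shows "x \<noteq> 0 \<Longrightarrow> x * a = x * b \<Longrightarrow> a = b" by simp

lemma pid_bezout:
  fixes x y :: "'a::idom"
  assumes pid: "pid_ring TYPE('a)"
  shows "\<exists>d s t. d = s*x + t*y \<and> d dvd x \<and> d dvd y"
proof -
  define I where "I = {s*x + t*y | s t. True}"
  have "0 \<in> I" unfolding I_def by (rule CollectI, rule exI[of _ 0], rule exI[of _ 0]) simp
  moreover have "\<forall>a\<in>I. \<forall>b\<in>I. a + b \<in> I"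
  proof (intro ballI)
    fix a b assume "a \<in> I" "b \<in> I"
    then obtain s t s' t' where "a = s*x+t*y" "b = s'*x+t'*y" unfolding I_def by blast
    then have "a + b = (s+s')*x + (t+t')*y" by (simp add: algebra_simps)
    then show "a + b \<in> I" unfolding I_def by blast
  qed
  moreover have "\<forall>a\<in>I. \<forall>r. r * a \<in> I"
  proof (intro ballI allI)
    fix a r assume "a \<in> I"
    then obtain s t where "a = s*x+t*y" unfolding I_def by blast
    then have "r * a = (r*s)*x + (r*t)*y" by (simp add: algebra_simps)
    then show "r * a \<in> I" unfolding I_def by blast
  qed
  ultimately obtain a where a: "I = {r * a | r. True}"
    using pid unfolding pid_ring_def by blast
  have "a \<in> I" unfolding a by (rule CollectI, rule exI[of _ 1]) simp
  then obtain s t where st: "a = s*x+t*y" unfolding I_def by blast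
  have "x \<in> I" unfolding I_def by (rule CollectI, rule exI[of _ 1], rule exI[of _ 0]) simp
  then have "a dvd x" unfolding a by auto
  have "y \<in> I" unfolding I_def by (rule CollectI, rule exI[of _ 0], rule exI[of _ 1]) simp
  then have "a dvd y" unfolding a by auto
  show ?thesis using st \<open>a dvd x\<close> \<open>a dvd y\<close> by blast
qed

lemma chain_dvd:
  fixes c :: "nat \<Rightarrow> 'a::comm_semiring_1"
  assumes "\<forall>k. c (Suc k) dvd c k" "k \<le> l"
  shows "c l dvd c k"
  using assms(2)
proof (induction l)
  case 0 then show ?case by simp
next
  case (Suc l)
  then show ?case
  proof (cases "k = Suc l")
    case True then show ?thesis by simp
  next
    case False
    then have "c l dvd c k" using Suc by simp
    moreover have "c (Suc l) dvd c l" using assms(1) by blast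
    ultimately show ?thesis using dvd_trans by blast
  qed
qed

lemma pid_acc:
  fixes c :: "nat \<Rightarrow> 'a::idom"
  assumes pid: "pid_ring TYPE('a)" and ch: "\<forall>k. c (Suc k) dvd c k"
  shows "\<exists>K. c K dvd c (Suc K)"
proof -
  define I where "I = {x. \<exists>k. c k dvd x}"
  have "0 \<in> I" unfolding I_def by simp
  moreover have "\<forall>a\<in>I. \<forall>b\<in>I. a + b \<in> I"
  proof (intro ballI)
    fix a b assume "a \<in> I" "b \<in> I"
    then obtain k l where kl: "c k dvd a" "c l dvd b" unfolding I_def by blast
    have m: "c (max k l) dvd c k" "c (max k l) dvd c l"
      using chain_dvd[OF ch] by auto
    have "c (max k l) dvd a" "c (max k l) dvd b"
      using dvd_trans[OF m(1) kl(1)] dvd_trans[OF m(2) kl(2)] by auto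
    then have "c (max k l) dvd a + b" by (rule dvd_add)
    then show "a + b \<in> I" unfolding I_def by blast
  qed
  moreover have "\<forall>a\<in>I. \<forall>r. r * a \<in> I"
  proof (intro ballI allI)
    fix a r assume "a \<in> I"
    then obtain k where "c k dvd a" unfolding I_def by blast
    then have "c k dvd r * a" by (rule dvd_mult)
    then show "r * a \<in> I" unfolding I_def by blast
  qed
  ultimately obtain a where a: "I = {r * a | r. True}"
    using pid unfolding pid_ring_def by blast
  have "a \<in> I" unfolding a by (rule CollectI, rule exI[of _ 1]) simp
  then obtain K where K: "c K dvd a" unfolding I_def by blast
  have "c (Suc K) \<in> I" unfolding I_def by (auto intro: exI[of _ "Suc K"])
  then have "a dvd c (Suc K)" unfolding a by auto
  then show ?thesis using dvd_trans[OF K] by blast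
qed

lemma finite_mult:
  fixes p r :: "'a::idom"
  assumes pid: "pid_ring TYPE('a)" and r: "r \<noteq> 0" and p: "\<not> p dvd 1"
  shows "\<exists>k. \<not> p ^ k dvd r"
proof (rule ccontr)
  assume "\<not> ?thesis"
  then have all: "\<forall>k. p ^ k dvd r" by blast
  have p0: "p \<noteq> 0" using all[rule_format, of 1] r by auto
  define c where "c k = (SOME q. r = p ^ k * q)" for k
  have ex: "\<exists>q. r = p ^ k * q" for k
  proof -
    have "p ^ k dvd r" using all by blast
    then obtain q where "r = p ^ k * q" by (rule dvdE)
    then show ?thesis by blast
  qed
  have c: "r = p ^ k * c k" for k
    unfolding c_def by (rule someI_ex[OF ex])
  have cs: "c k = p * c (Suc k)" for k
  proof -
    have "p ^ k * c k = p ^ Suc k * c (Suc k)" using c[of k] c[of "Suc k"] by (rule trans[OF sym])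
    also have "\<dots> = p ^ k * (p * c (Suc k))" by (simp only: power_Suc mult_ac)
    finally have "p ^ k * c k = p ^ k * (p * c (Suc k))" .
    moreover have "p ^ k \<noteq> 0" using p0 by simp
    ultimately show ?thesis by (rule canc[rotated])
  qed
  have "c (Suc k) dvd c k" for k
  proof -
    have "c k = c (Suc k) * p" using cs[of k] by (simp only: mult.commute)
    then show ?thesis by (rule dvdI)
  qed
  then have "\<forall>k. c (Suc k) dvd c k" by blast
  from pid_acc[OF pid this] obtain K e where e: "c (Suc K) = c K * e" by (auto elim: dvdE)
  have cK: "c K \<noteq> 0" using c[of K] r by auto
  have "c K * 1 = p * c (Suc K)" using cs[of K] by simp
  also have "\<dots> = c K * (p * e)" unfolding e by (simp only: mult_ac)
  finally have "1 = p * e" using cK by (rule canc[rotated])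
  then have "p dvd 1" by (rule dvdI)
  then show False using p by blast
qed

lemma irreducible_factor:
  fixes x :: "'a::idom"
  assumes pid: "pid_ring TYPE('a)" and x: "x \<noteq> 0" "\<not> x dvd 1"
  shows "\<exists>q. irreducible q \<and> q dvd x"
proof (rule ccontr)
  assume na: "\<not> ?thesis"
  define Pr where "Pr y \<longleftrightarrow> y dvd x \<and> y \<noteq> 0 \<and> \<not> y dvd 1" for y
  have step: "\<exists>a. Pr a \<and> a dvd y \<and> \<not> y dvd a" if py: "Pr y" for y
  proof -
    have "\<not> irreducible y" using na py unfolding Pr_def by blast
    then obtain a b where ab: "y = a * b" "\<not> a dvd 1" "\<not> b dvd 1"
      using py unfolding Pr_def irreducible_def by blast
    have "\<not> y dvd a"
    proof
      assume "y dvd a"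
      then obtain e where ae: "a = y * e" by (auto elim: dvdE)
      have "y * (b * e) = (y * e) * b" by (simp only: mult_ac)
      also have "\<dots> = a * b" by (simp only: ae)
      also have "\<dots> = y" using ab(1) by (rule sym)
      finally have "y * 1 = y * (b * e)" by simp
      moreover have "y \<noteq> 0" using py unfolding Pr_def by blast
      ultimately have "1 = b * e" by (rule canc[rotated])
      then have "b * e = 1" by simp
      then have "b dvd 1" by (intro dvdI[OF sym])
      then show False using ab(3) by blast
    qed
    moreover have "Pr a" using py ab unfolding Pr_def by (auto intro: dvd_trans)
    ultimately show ?thesis using ab by auto
  qed
  define c where "c = rec_nat x (\<lambda>_ y. SOME a. Pr a \<and> a dvd y \<and> \<not> y dvd a)"
  have c0: "c 0 = x" and cS: "c (Suc k) = (SOME a. Pr a \<and> a dvd c k \<and> \<not> c k dvd a)" for k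
    by (simp_all add: c_def)
  have P: "Pr (c k)" for k
  proof (induction k)
    case 0 then show ?case using x unfolding c0 Pr_def by simp
  next
    case (Suc k)
    then show ?case unfolding cS using someI_ex[OF step[OF Suc]] by blast
  qed
  have D: "c (Suc k) dvd c k \<and> \<not> c k dvd c (Suc k)" for k
    unfolding cS using someI_ex[OF step[OF P[of k]]] by blast
  then have "\<forall>k. c (Suc k) dvd c k" by blast
  from pid_acc[OF pid this] obtain K where "c K dvd c (Suc K)" by blast
  then show False using D by blast
qed

lemma prime_elem_split:
  fixes p :: "'a::idom"
  assumes "prime_elem p" "p = q * e"
  shows "q dvd 1 \<or> e dvd 1"
proof -
  have "p dvd q * e" using assms(2) by simp
  then have "p dvd q \<or> p dvd e" using assms(1) prime_elem_dvd_multD by blast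
  then show ?thesis
  proof
    assume "p dvd q"
    then obtain c where qc: "q = p * c" by (auto elim: dvdE)
    have "p * (c * e) = q * e" unfolding qc by (simp only: mult_ac)
    then have "p * 1 = p * (c * e)" using assms(2) by simp
    moreover have "p \<noteq> 0" using assms(1) prime_elem_not_zeroI by blast
    ultimately have "1 = c * e" by (rule canc[rotated])
    then have "1 = e * c" by (simp add: mult.commute)
    then have "e dvd 1" by (rule dvdI)
    then show ?thesis by blast
  next
    assume "p dvd e"
    then obtain c where ec: "e = p * c" by (auto elim: dvdE)
    have "p * (c * q) = q * e" unfolding ec by (simp only: mult_ac)
    then have "p * 1 = p * (c * q)" using assms(2) by simp
    moreover have "p \<noteq> 0" using assms(1) prime_elem_not_zeroI by blast
    ultimately have "1 = c * q" by (rule canc[rotated])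
    then have "1 = q * c" by (simp add: mult.commute)
    then have "q dvd 1" by (rule dvdI)
    then show ?thesis by blast
  qed
qed

lemma irreducible_prime:
  fixes q :: "'a::idom"
  assumes pid: "pid_ring TYPE('a)" and q: "irreducible q"
  shows "prime_elem q"
proof (rule prime_elemI)
  show "q \<noteq> 0" "\<not> q dvd 1" using q by (auto simp: irreducible_def)
  fix a b assume qab: "q dvd a * b"
  show "q dvd a \<or> q dvd b"
  proof (cases "q dvd a")
    case True then show ?thesis by blast
  next
    case False
    note nqa = False
    obtain d s t where d: "d = s*q + t*a" "d dvd q" "d dvd a" using pid_bezout[OF pid] by blast
    obtain e where e: "q = d * e" using d(2) by (auto elim: dvdE)
    have "d dvd 1 \<or> e dvd 1" using q e by (auto simp: irreducible_def)
    moreover have "\<not> e dvd 1"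
    proof
      assume "e dvd 1"
      then have "q dvd d" using e by (simp add: dvd_mult_unit_iff)
      then show False using nqa dvd_trans[OF _ d(3)] by blast
    qed
    ultimately have "d dvd 1" by blast
    then obtain d' where d': "1 = d * d'" by (auto elim: dvdE)
    have "b = (s*q + t*a) * d' * b" using d(1) d' by (simp add: algebra_simps)
    also have "\<dots> = q * (s * d' * b) + (a * b) * (t * d')" by (simp add: algebra_simps)
    finally have eqb: "b = q * (s * d' * b) + (a * b) * (t * d')" .
    have qX: "q dvd q * (s * d' * b) + (a * b) * (t * d')"
      using qab by (intro dvd_add) auto
    have "q dvd b" by (subst eqb) (rule qX)
    then show ?thesis by blast
  qed
qed

lemma prime_factor:
  fixes x :: "'a::idom"
  assumes pid: "pid_ring TYPE('a)" and x: "x \<noteq> 0" "\<not> x dvd 1"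
  shows "\<exists>q. prime_elem q \<and> q dvd x"
  using irreducible_factor[OF assms] irreducible_prime[OF pid] by blast

lemma prime_dvd_prime_pow:
  fixes p :: "'a::idom"
  assumes p: "prime_elem p" and q: "prime_elem q" and "q dvd p ^ k"
  shows "p dvd q"
proof -
  have "q dvd p" using assms prime_elem_dvd_power by blast
  then obtain e where e: "p = q * e" by (auto elim: dvdE)
  then have "e dvd 1" using prime_elem_split[OF p e] q prime_elem_not_unit by blast
  then show ?thesis using e by (simp add: dvd_mult_unit_iff)
qed

lemma prime_coprime_pow:
  fixes p r :: "'a::idom"
  assumes pid: "pid_ring TYPE('a)" and p: "prime_elem p" and r: "\<not> p dvd r"
  shows "\<exists>s t. s * p ^ k + t * r = 1"
proof -
  obtain d s t where d: "d = s*p^k + t*r" "d dvd p^k" "d dvd r" using pid_bezout[OF pid] by blast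
  have "d dvd 1"
  proof (rule ccontr)
    assume nu: "\<not> d dvd 1"
    have "d \<noteq> 0" using d(3) r by auto
    then obtain q where q: "prime_elem q" "q dvd d" using prime_factor[OF pid _ nu] by blast
    then have "q dvd p ^ k" using dvd_trans[OF _ d(2)] by blast
    then have "p dvd q" using prime_dvd_prime_pow[OF p q(1)] by blast
    then show False using r dvd_trans[OF dvd_trans[OF _ q(2)] d(3)] by blast
  qed
  then obtain d' where d': "1 = d * d'" by (auto elim: dvdE)
  then have "(s * d') * p ^ k + (t * d') * r = 1" using d(1) by (simp add: algebra_simps)
  then show ?thesis by blast
qed

lemma nonunit_dvd_prime_pow:
  fixes p x :: "'a::idom"
  assumes pid: "pid_ring TYPE('a)" and p: "prime_elem p" and x: "x dvd p ^ m" "\<not> x dvd 1"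
  shows "p dvd x"
proof -
  have "x \<noteq> 0" using x p by (auto simp: prime_elem_def)
  then obtain q where q: "prime_elem q" "q dvd x" using prime_factor[OF pid _ x(2)] by blast
  then have "p dvd q" using prime_dvd_prime_pow[OF p q(1)] dvd_trans[OF _ x(1)] by blast
  then show ?thesis using dvd_trans[OF _ q(2)] by blast
qed


lemma fps_unit_iff:
  fixes F :: "'a::comm_ring_1 fps"
  shows "F dvd 1 \<longleftrightarrow> F $ 0 dvd 1"
proof
  assume "F dvd 1"
  then obtain G where "1 = F * G" by (auto elim: dvdE)
  then have "F $ 0 * G $ 0 = 1" by (metis fps_mult_nth_0 fps_one_nth)
  then show "F $ 0 dvd 1" by (metis dvdI)
next
  assume "F $ 0 dvd 1"
  then obtain y where "1 = F $ 0 * y" by (auto elim: dvdE)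
  then have "F * fps_right_inverse F y = 1" by (intro fps_right_inverse) simp
  then show "F dvd 1" by (metis dvdI)
qed

function splitseq :: "'a::comm_ring_1 fps \<Rightarrow> 'a \<Rightarrow> 'a \<Rightarrow> 'a \<Rightarrow> 'a \<Rightarrow> nat \<Rightarrow> 'a \<times> 'a" where
  "splitseq F a b s t n = (if n = 0 then (a, b) else
     (let c = F $ n - (\<Sum>i\<in>{1..<n}. fst (splitseq F a b s t i) * snd (splitseq F a b s t (n - i)))
      in (t * c, s * c)))"
  by pat_completeness auto
termination by (relation "measure (\<lambda>(F,a,b,s,t,n). n)") auto

declare splitseq.simps[simp del]

lemma sum_split_ends:
  fixes g :: "nat \<Rightarrow> 'a::comm_monoid_add"
  assumes "0 < n"
  shows "(\<Sum>i=0..n. g i) = g 0 + g n + (\<Sum>i\<in>{1..<n}. g i)"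
proof -
  have "{0..n} = insert 0 (insert n {1..<n})" using assms by auto
  then show ?thesis using assms by (simp add: add_ac)
qed

lemma coprime_split:
  fixes F :: "'a::comm_ring_1 fps"
  assumes F0: "F $ 0 = a * b" and st: "s * a + t * b = 1"
  shows "\<exists>G H. F = G * H \<and> G $ 0 = a \<and> H $ 0 = b"
proof -
  define G where "G = Abs_fps (\<lambda>n. fst (splitseq F a b s t n))"
  define H where "H = Abs_fps (\<lambda>n. snd (splitseq F a b s t n))"
  have G0: "G $ 0 = a" and H0: "H $ 0 = b" unfolding G_def H_def by (simp_all add: splitseq.simps)
  have "F $ n = (G * H) $ n" for n
  proof (cases "n = 0")
    case True then show ?thesis using F0 G0 H0 by simp
  next
    case False
    define c where "c = F $ n - (\<Sum>i\<in>{1..<n}. G $ i * H $ (n - i))"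
    have Gn: "G $ n = t * c" and Hn: "H $ n = s * c"
      using False unfolding c_def G_def H_def by (simp_all add: splitseq.simps[of F a b s t n] Let_def)
    have "(G * H) $ n = G $ 0 * H $ n + G $ n * H $ 0 + (\<Sum>i\<in>{1..<n}. G $ i * H $ (n - i))"
      using False by (simp add: fps_mult_nth sum_split_ends)
    also have "\<dots> = (s * a + t * b) * c + (F $ n - c)"
      unfolding G0 H0 Gn Hn c_def by (simp add: algebra_simps)
    finally show ?thesis using st by simp
  qed
  then have "F = G * H" by (intro fps_ext) simp
  then show ?thesis using G0 H0 by blast
qed


lemma dvd_add_diff: fixes q :: "'a::comm_ring_1" shows "q dvd a - b \<Longrightarrow> q dvd b \<Longrightarrow> q dvd a"
proof -
  assume "q dvd a - b" "q dvd b"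
  then have "q dvd (a - b) + b" by (rule dvd_add)
  then show ?thesis by simp
qed

lemma dvd_diff_swap: fixes q :: "'a::comm_ring_1" shows "q dvd a - b \<Longrightarrow> q dvd b - a"
proof -
  assume "q dvd a - b"
  then have "q dvd - (a - b)" by (simp only: dvd_minus_iff)
  then show ?thesis by simp
qed

lemma pow_Suc_dvd: fixes p :: "'a::comm_ring_1" shows "p ^ Suc m dvd x \<Longrightarrow> p ^ m dvd x"
  by (rule dvd_trans[OF le_imp_power_dvd[of m "Suc m"]]) simp_all

lemma compatD: "padic_compat p x \<Longrightarrow> n \<le> m \<Longrightarrow> p ^ n dvd (x m - x n)"
  by (simp add: padic_compat_def)

lemma compat_const[simp]: "padic_compat p (\<lambda>n. c)"
  by (simp add: padic_compat_def)

lemma compat_add: "padic_compat p x \<Longrightarrow> padic_compat p y \<Longrightarrow> padic_compat p (\<lambda>n. x n + y n)"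
  unfolding padic_compat_def
proof (intro allI impI)
  fix n m :: nat assume "\<forall>n m. n \<le> m \<longrightarrow> p ^ n dvd x m - x n" "\<forall>n m. n \<le> m \<longrightarrow> p ^ n dvd y m - y n" "n \<le> m"
  then have "p ^ n dvd (x m - x n) + (y m - y n)" by (simp add: dvd_add)
  then show "p ^ n dvd x m + y m - (x n + y n)" by (simp add: algebra_simps)
qed

lemma compat_diff: "padic_compat p x \<Longrightarrow> padic_compat p y \<Longrightarrow> padic_compat p (\<lambda>n. x n - y n)"
  unfolding padic_compat_def
proof (intro allI impI)
  fix n m :: nat assume "\<forall>n m. n \<le> m \<longrightarrow> p ^ n dvd x m - x n" "\<forall>n m. n \<le> m \<longrightarrow> p ^ n dvd y m - y n" "n \<le> m"
  then have "p ^ n dvd (x m - x n) - (y m - y n)" by (simp add: dvd_diff)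
  then show "p ^ n dvd x m - y m - (x n - y n)" by (simp add: algebra_simps)
qed

lemma compat_mult: "padic_compat p x \<Longrightarrow> padic_compat p y \<Longrightarrow> padic_compat p (\<lambda>n. x n * y n)"
  unfolding padic_compat_def
proof (intro allI impI)
  fix n m :: nat assume "\<forall>n m. n \<le> m \<longrightarrow> p ^ n dvd x m - x n" "\<forall>n m. n \<le> m \<longrightarrow> p ^ n dvd y m - y n" "n \<le> m"
  then have "p ^ n dvd x m * (y m - y n) + (x m - x n) * y n" by (simp add: dvd_add)
  then show "p ^ n dvd x m * y m - x n * y n" by (simp add: algebra_simps)
qed

lemma compat_sum:
  assumes "\<And>j. j \<in> S \<Longrightarrow> padic_compat p (x j)"
  shows "padic_compat p (\<lambda>n. \<Sum>j\<in>S. x j n)"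
  using assms
proof (induction S rule: infinite_finite_induct)
  case (insert j S)
  then have "padic_compat p (\<lambda>n. x j n + (\<Sum>j\<in>S. x j n))" by (intro compat_add) auto
  then show ?case using insert by simp
qed auto

lemma dvd_cancel_pow:
  fixes p z :: "'a::idom"
  assumes "p \<noteq> 0" "p ^ (n + a) dvd p ^ a * z"
  shows "p ^ n dvd z"
proof -
  have "p ^ a * p ^ n dvd p ^ a * z" using assms(2) by (simp add: power_add mult.commute)
  then show ?thesis using assms(1) by (simp add: dvd_mult_cancel_left)
qed

lemma unit_of_nondiv:
  fixes p :: "'a::idom"
  assumes pid: "pid_ring TYPE('a)" and p: "prime_elem p" and w: "padic_compat p w"
    and nd: "\<not> p dvd w 1"
  shows "padic_unit p w"
proof -
  have ex: "\<exists>y s. s * p ^ n + y * w n = 1" for n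
  proof (cases "n = 0")
    case True then show ?thesis by (intro exI[of _ 0] exI[of _ 1]) simp
  next
    case False
    have "p ^ 1 dvd w n - w 1" using compatD[OF w, of 1 n] False by simp
    then have pd: "p dvd w n - w 1" by simp
    have "\<not> p dvd w n"
    proof
      assume "p dvd w n"
      then have "p dvd w n - (w n - w 1)" using pd by (rule dvd_diff)
      then show False using nd by simp
    qed
    then show ?thesis using prime_coprime_pow[OF pid p] by blast
  qed
  define y where "y n = (SOME y. \<exists>s. s * p ^ n + y * w n = 1)" for n
  have y: "\<exists>s. s * p ^ n + y n * w n = 1" for n unfolding y_def by (rule someI_ex[OF ex])
  have y1: "p ^ n dvd w n * y n - 1" for n
  proof -
    obtain s where "s * p ^ n + y n * w n = 1" using y by blast
    then have "w n * y n - 1 = p ^ n * (- s)" by (simp add: algebra_simps)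
    then show ?thesis by simp
  qed
  have "padic_compat p y" unfolding padic_compat_def
  proof (intro allI impI)
    fix n m :: nat assume nm: "n \<le> m"
    obtain s where s: "s * p ^ n + y n * w n = 1" using y by blast
    have "p ^ n dvd p ^ m" using nm by (simp add: le_imp_power_dvd)
    then have a1: "p ^ n dvd w m * y m - 1" using dvd_trans[OF _ y1[of m]] by blast
    have a2: "p ^ n dvd w m - w n" using compatD[OF w nm] .
    have eq: "w n * (y m - y n) = (w m * y m - 1) - (w m - w n) * y m - (w n * y n - 1)"
      by (simp add: algebra_simps)
    have "p ^ n dvd (w m * y m - 1) - (w m - w n) * y m - (w n * y n - 1)"
      by (intro dvd_diff dvd_mult2 a1 a2 y1)
    then have a3: "p ^ n dvd w n * (y m - y n)" by (subst eq)
    have "y m - y n = (y m - y n) * (s * p ^ n + y n * w n)" using s by simp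
    also have "\<dots> = p ^ n * (s * (y m - y n)) + y n * (w n * (y m - y n))" by (simp add: algebra_simps)
    finally have eq2: "y m - y n = p ^ n * (s * (y m - y n)) + y n * (w n * (y m - y n))" .
    have "p ^ n dvd p ^ n * (s * (y m - y n)) + y n * (w n * (y m - y n))"
      by (rule dvd_add[OF dvd_triv_left a3[THEN dvd_mult]])
    then show "p ^ n dvd y m - y n" by (simp only: eq2[symmetric])
  qed
  then show ?thesis unfolding padic_unit_def using y1 by blast
qed

lemma not_unit_dvd:
  fixes p :: "'a::idom"
  assumes p: "prime_elem p" and "p dvd x 1"
  shows "\<not> padic_unit p x"
proof
  assume "padic_unit p x"
  then obtain y where "\<forall>n. p ^ n dvd x n * y n - 1" unfolding padic_unit_def by blast
  then have "p ^ 1 dvd x 1 * y 1 - 1" by blast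
  then have "p dvd x 1 * y 1 - 1" by simp
  moreover have "p dvd x 1 * y 1" using assms(2) by simp
  ultimately have "p dvd x 1 * y 1 - (x 1 * y 1 - 1)" by (rule dvd_diff[rotated])
  then have "p dvd 1" by simp
  then show False using p prime_elem_not_unit by blast
qed


function Eseq :: "'a::comm_ring_1 \<Rightarrow> nat \<Rightarrow> (nat \<Rightarrow> 'a poly) \<Rightarrow> (nat \<Rightarrow> 'a) \<Rightarrow> nat \<Rightarrow> nat \<Rightarrow> 'a" where
  "Eseq p a g z k = (if k = 0 then z else (\<lambda>n. z n * (SOME q.
      (\<Sum>j\<in>{1..k}. coeff (g a) j * Eseq p a g z (k - j) a)
      - (\<Sum>j\<in>{1..k}. coeff (g (n + a)) j * Eseq p a g z (k - j) (n + a)) = p ^ a * q)))"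
  by pat_completeness auto
termination by (relation "measure (\<lambda>(p,a,g,z,k). k)") auto

declare Eseq.simps[simp del]

function Hseq :: "'a::comm_ring_1 \<Rightarrow> nat \<Rightarrow> 'a poly \<Rightarrow> (nat \<Rightarrow> 'a) \<Rightarrow> nat \<Rightarrow> 'a" where
  "Hseq p a f G k = (SOME q. coeff f k - (\<Sum>j\<in>{1..k}. G j * Hseq p a f G (k - j)) = p ^ a * q)"
  by pat_completeness auto
termination by (relation "measure (\<lambda>(p,a,f,G,k). k)") auto

declare Hseq.simps[simp del]

locale C2ctx =
  fixes p :: "'a::idom" and f :: "'a poly" and g h :: "nat \<Rightarrow> 'a poly" and m :: nat and u :: 'a
  assumes pid: "pid_ring TYPE('a)" and p: "prime_elem p" and f0: "coeff f 0 = p ^ m * u"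
    and u: "u dvd 1"
    and gp: "padic_poly p g" and hp: "padic_poly p h" and fac: "padic_poly_factors p f g h"
    and gn: "p dvd coeff (g 1) 0" and hn: "p dvd coeff (h 1) 0"
begin

lemma p0: "p \<noteq> 0" using p by (simp add: prime_elem_def)
lemma pnu: "\<not> p dvd 1" using p by (simp add: prime_elem_def)

lemma gc: "padic_compat p (\<lambda>n. coeff (g n) i)" using gp by (simp add: padic_poly_def)
lemma hc: "padic_compat p (\<lambda>n. coeff (h n) i)" using hp by (simp add: padic_poly_def)

lemma fcong_fac: "fcong (p ^ n) (fps_of_poly f) (fps_of_poly (g n) * fps_of_poly (h n))"
  using fac unfolding fcong_def padic_poly_factors_def by (simp flip: fps_of_poly_mult)

lemma fac0: "p ^ n dvd coeff f 0 - coeff (g n) 0 * coeff (h n) 0"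
proof -
  have "p ^ n dvd coeff (f - g n * h n) 0" using fac unfolding padic_poly_factors_def by blast
  then show ?thesis by (simp add: coeff_mult_0)
qed

lemma pdiv_n: "1 \<le> n \<Longrightarrow> p dvd coeff (g n) 0" "1 \<le> n \<Longrightarrow> p dvd coeff (h n) 0"
proof -
  assume n: "1 \<le> n"
  have "p ^ 1 dvd coeff (g n) 0 - coeff (g 1) 0" using compatD[OF gc n] .
  then have "p dvd coeff (g n) 0 - coeff (g 1) 0" by simp
  then show "p dvd coeff (g n) 0" using gn by (rule dvd_add_diff)
  have "p ^ 1 dvd coeff (h n) 0 - coeff (h 1) 0" using compatD[OF hc n] .
  then have "p dvd coeff (h n) 0 - coeff (h 1) 0" by simp
  then show "p dvd coeff (h n) 0" using hn by (rule dvd_add_diff)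
qed

lemma no_high: "\<not> p ^ m dvd coeff (g (Suc m)) 0"
proof
  assume a: "p ^ m dvd coeff (g (Suc m)) 0"
  have "p dvd coeff (h (Suc m)) 0" using pdiv_n by simp
  with a have "p ^ m * p dvd coeff (g (Suc m)) 0 * coeff (h (Suc m)) 0" by (rule mult_dvd_mono)
  then have "p ^ Suc m dvd coeff (g (Suc m)) 0 * coeff (h (Suc m)) 0" by (simp add: mult.commute)
  moreover have "p ^ Suc m dvd coeff f 0 - coeff (g (Suc m)) 0 * coeff (h (Suc m)) 0" using fac0 .
  ultimately have "p ^ Suc m dvd coeff f 0" by (rule dvd_add_diff[rotated])
  then have "p ^ m * p dvd p ^ m * u" unfolding f0 by (simp add: mult.commute)
  then have "p dvd u" using p0 by (simp add: dvd_mult_cancel_left)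
  then show False using u pnu dvd_trans[of p u 1] by blast
qed

definition "xs n = coeff (g n) 0"
definition "aa = (LEAST k. \<not> p ^ Suc k dvd xs (Suc k))"

lemma aa_ex: "\<not> p ^ Suc aa dvd xs (Suc aa)"
proof -
  have "\<not> p ^ Suc m dvd xs (Suc m)" using no_high unfolding xs_def
    using pow_Suc_dvd by blast
  then show ?thesis unfolding aa_def by (rule LeastI)
qed

lemma aa_below: "k < aa \<Longrightarrow> p ^ Suc k dvd xs (Suc k)"
  unfolding aa_def using not_less_Least by blast

lemma aa_pos: "1 \<le> aa"
proof (rule ccontr)
  assume "\<not> 1 \<le> aa"
  then have "aa = 0" by simp
  then show False using aa_ex gn unfolding xs_def by simp
qed

lemma pa: "p ^ aa dvd xs aa"
  using aa_below[of "aa - 1"] aa_pos by simp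

lemma aa_less: "aa < m"
proof (rule ccontr)
  assume "\<not> aa < m"
  then have "aa \<ge> m" by simp
  show False
  proof (cases "aa = m")
    case True
    then have "p ^ m dvd xs m" using pa by simp
    moreover have "p ^ m dvd xs (Suc m) - xs m" unfolding xs_def using compatD[OF gc, of m "Suc m"] by simp
    ultimately have "p ^ m dvd xs (Suc m)" by (rule dvd_add_diff[rotated])
    then show False using no_high unfolding xs_def by simp
  next
    case False
    then have "m < aa" using \<open>aa \<ge> m\<close> by simp
    then have "p ^ Suc m dvd xs (Suc m)" using aa_below by simp
    then show False using no_high pow_Suc_dvd unfolding xs_def by blast
  qed
qed

lemma pa_n: "p ^ aa dvd xs (n + aa)"
proof -
  have "p ^ aa dvd xs (n + aa) - xs aa" unfolding xs_def using compatD[OF gc, of aa "n + aa"] by simp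
  then show ?thesis using pa by (rule dvd_add_diff)
qed

definition "ws n = (SOME q. xs (n + aa) = p ^ aa * q)"

lemma ws: "xs (n + aa) = p ^ aa * ws n"
  unfolding ws_def by (rule someI_ex) (use pa_n in \<open>auto elim: dvdE\<close>)

lemma ws_compat: "padic_compat p ws"
  unfolding padic_compat_def
proof (intro allI impI)
  fix n k :: nat assume "n \<le> k"
  then have "p ^ (n + aa) dvd xs (k + aa) - xs (n + aa)" unfolding xs_def using compatD[OF gc, of "n + aa" "k + aa"] by simp
  then have "p ^ (n + aa) dvd p ^ aa * (ws k - ws n)" by (simp add: ws algebra_simps)
  then show "p ^ n dvd ws k - ws n" using dvd_cancel_pow p0 by blast
qed

lemma ws_nd: "\<not> p dvd ws 1"
proof
  assume "p dvd ws 1"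
  then have "p ^ aa * p dvd p ^ aa * ws 1" by simp
  then have "p ^ Suc aa dvd xs (Suc aa)" using ws[of 1] by (simp add: mult.commute)
  then show False using aa_ex by simp
qed

lemma xs_ws: "p ^ n dvd xs n - p ^ aa * ws n"
proof -
  have "p ^ n dvd xs (n + aa) - xs n" unfolding xs_def using compatD[OF gc, of n "n + aa"] by simp
  then have "p ^ n dvd xs n - xs (n + aa)" by (rule dvd_diff_swap)
  then show ?thesis by (simp add: ws)
qed

definition "zs = (SOME y. padic_compat p y \<and> (\<forall>n. p ^ n dvd ws n * y n - 1))"

lemma zs: "padic_compat p zs" "p ^ n dvd ws n * zs n - 1"
proof -
  have "padic_unit p ws" using unit_of_nondiv[OF pid p ws_compat ws_nd] .
  then have "padic_compat p zs \<and> (\<forall>n. p ^ n dvd ws n * zs n - 1)"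
    unfolding zs_def padic_unit_def by (rule someI_ex)
  then show "padic_compat p zs" "p ^ n dvd ws n * zs n - 1" by auto
qed

lemma xz: "p ^ n dvd xs n * zs n - p ^ aa"
proof -
  have "xs n * zs n - p ^ aa = (xs n - p ^ aa * ws n) * zs n + p ^ aa * (ws n * zs n - 1)"
    by (simp add: algebra_simps)
  moreover have "p ^ n dvd (xs n - p ^ aa * ws n) * zs n + p ^ aa * (ws n * zs n - 1)"
    by (rule dvd_add[OF dvd_mult2[OF xs_ws] dvd_mult[OF zs(2)]])
  ultimately show ?thesis by simp
qed

definition "sS k n = (\<Sum>j\<in>{1..k}. coeff (g n) j * Eseq p aa g zs (k - j) n)"
definition "Gk k = (if k = 0 then p ^ aa else sS k aa)"

lemma E0: "Eseq p aa g zs 0 = zs" by (subst Eseq.simps) simp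

lemma ES: "0 < k \<Longrightarrow> Eseq p aa g zs k n = zs n * (SOME q. Gk k - sS k (n + aa) = p ^ aa * q)"
  by (subst Eseq.simps) (simp add: sS_def Gk_def)

lemma E_compat_all: "padic_compat p (Eseq p aa g zs k) \<and> padic_compat p (sS k)"
proof (induction k rule: less_induct)
  case (less k)
  have sc: "padic_compat p (sS k)" unfolding sS_def
  proof (rule compat_sum)
    fix j assume "j \<in> {1..k}"
    then have "k - j < k" by auto
    then show "padic_compat p (\<lambda>n. coeff (g n) j * Eseq p aa g zs (k - j) n)"
      using less gc by (intro compat_mult) auto
  qed
  show ?case
  proof (cases "k = 0")
    case True then show ?thesis using zs(1) sc by (simp add: E0)
  next
    case False
    define Q where "Q n = (SOME q. Gk k - sS k (n + aa) = p ^ aa * q)" for n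
    have ex: "\<exists>q. Gk k - sS k (n + aa) = p ^ aa * q" for n
    proof -
      have "p ^ aa dvd sS k (n + aa) - sS k aa" using compatD[OF sc, of aa "n + aa"] by simp
      then have "p ^ aa dvd Gk k - sS k (n + aa)" using False unfolding Gk_def
        by (simp add: dvd_diff_swap)
      then show ?thesis by (auto elim: dvdE)
    qed
    have Q: "Gk k - sS k (n + aa) = p ^ aa * Q n" for n unfolding Q_def by (rule someI_ex[OF ex])
    have "padic_compat p Q" unfolding padic_compat_def
    proof (intro allI impI)
      fix n l :: nat assume "n \<le> l"
      then have "p ^ (n + aa) dvd sS k (n + aa) - sS k (l + aa)"
        using compatD[OF sc, of "n + aa" "l + aa"] by (simp add: dvd_diff_swap)
      also have "sS k (n + aa) - sS k (l + aa) = p ^ aa * (Q l - Q n)"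
        using Q[of n] Q[of l] by (simp add: algebra_simps)
      finally show "p ^ n dvd Q l - Q n" using dvd_cancel_pow p0 by blast
    qed
    then have "padic_compat p (\<lambda>n. zs n * Q n)" using zs(1) by (intro compat_mult)
    moreover have "Eseq p aa g zs k = (\<lambda>n. zs n * Q n)" using ES False Q_def by auto
    ultimately show ?thesis using sc by simp
  qed
qed

lemma E_compat: "padic_compat p (Eseq p aa g zs k)" using E_compat_all by blast
lemma sS_compat: "padic_compat p (sS k)" using E_compat_all by blast

lemma Gk_key: "p ^ n dvd (\<Sum>j=0..k. coeff (g n) j * Eseq p aa g zs (k - j) n) - Gk k"
proof (cases "k = 0")
  case True then show ?thesis using xz by (simp add: E0 Gk_def xs_def)
next
  case False
  define Q where "Q n = (SOME q. Gk k - sS k (n + aa) = p ^ aa * q)" for n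
  have ex: "\<exists>q. Gk k - sS k (n + aa) = p ^ aa * q" for n
  proof -
    have "p ^ aa dvd sS k (n + aa) - sS k aa" using compatD[OF sS_compat, of aa "n + aa"] by simp
    then have "p ^ aa dvd Gk k - sS k (n + aa)" using False unfolding Gk_def
      by (simp add: dvd_diff_swap)
    then show ?thesis by (auto elim: dvdE)
  qed
  have Q: "Gk k - sS k (n + aa) = p ^ aa * Q n" for n unfolding Q_def by (rule someI_ex[OF ex])
  have En: "Eseq p aa g zs k n = zs n * Q n" using ES False Q_def by auto
  have "{0..k} = insert 0 {1..k}" by auto
  then have "(\<Sum>j=0..k. coeff (g n) j * Eseq p aa g zs (k - j) n) = xs n * Eseq p aa g zs k n + sS k n"
    by (simp add: sS_def xs_def)
  also have "\<dots> - Gk k = (xs n * zs n - p ^ aa) * Q n - (sS k (n + aa) - sS k n)"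
    using Q[of n] En by (simp add: algebra_simps)
  finally have eq: "(\<Sum>j=0..k. coeff (g n) j * Eseq p aa g zs (k - j) n) - Gk k
      = (xs n * zs n - p ^ aa) * Q n - (sS k (n + aa) - sS k n)" .
  have "p ^ n dvd (xs n * zs n - p ^ aa) * Q n" using xz by simp
  moreover have "p ^ n dvd sS k (n + aa) - sS k n" using compatD[OF sS_compat, of n "n + aa"] by simp
  ultimately show ?thesis unfolding eq by (rule dvd_diff)
qed

definition "Ef n = Abs_fps (\<lambda>k. Eseq p aa g zs k n)"
definition "Gf = Abs_fps Gk"

lemma gE: "fcong (p ^ n) (fps_of_poly (g n) * Ef n) Gf"
  unfolding fcong_def Ef_def Gf_def using Gk_key by (simp add: fps_mult_nth)

end


lemma fps_mult_split0:
  fixes A B :: "'a::comm_ring_1 fps"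
  shows "(A * B) $ i = A $ 0 * B $ i + (\<Sum>j\<in>{1..i}. A $ j * B $ (i - j))"
proof -
  have "{0..i} = insert 0 {1..i}" by auto
  then show ?thesis by (simp add: fps_mult_nth)
qed

lemma fps_mult_low:
  fixes A D :: "'a::comm_ring_1 fps"
  assumes "\<forall>i<k. D $ i = 0"
  shows "\<forall>i<k. (A * D) $ i = 0" "(A * D) $ k = A $ 0 * D $ k"
proof -
  show "\<forall>i<k. (A * D) $ i = 0"
  proof (intro allI impI)
    fix i assume "i < k"
    then have "\<forall>j\<in>{0..i}. D $ (i - j) = 0" using assms by auto
    then show "(A * D) $ i = 0" by (simp add: fps_mult_nth)
  qed
  have "\<forall>j\<in>{1..k}. D $ (k - j) = 0" using assms by auto
  then show "(A * D) $ k = A $ 0 * D $ k" by (simp add: fps_mult_split0)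
qed

lemma dvd_sum_terms:
  fixes q :: "'a::comm_ring_1"
  assumes "\<forall>j\<in>S. q dvd b j"
  shows "q dvd (\<Sum>j\<in>S. a j * b j)"
  using assms by (intro dvd_sum) (simp add: dvd_mult)

context C2ctx
begin

definition "Hs = Hseq p aa f Gk"
definition "ck k = coeff f k - (\<Sum>j\<in>{1..k}. Gk j * Hs (k - j))"

lemma Hs_eq: "p ^ aa dvd ck k \<Longrightarrow> ck k = p ^ aa * Hs k"
proof -
  assume "p ^ aa dvd ck k"
  then have ex: "\<exists>q. ck k = p ^ aa * q" by (auto elim: dvdE)
  have "Hs k = (SOME q. ck k = p ^ aa * q)" unfolding Hs_def ck_def
    by (subst Hseq.simps) simp
  then show ?thesis using someI_ex[OF ex] by simp
qed

lemma Gk0: "Gk 0 = p ^ aa" by (simp add: Gk_def)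

lemma Gf0: "Gf $ 0 = p ^ aa" by (simp add: Gf_def Gk0)

lemma ck_dvd: "p ^ aa dvd ck k"
proof (induction k rule: less_induct)
  case (less k)
  have exact: "coeff f i = (\<Sum>j=0..i. Gk j * Hs (i - j))" if "i < k" for i
  proof -
    have "ck i = p ^ aa * Hs i" using less that Hs_eq by blast
    moreover have "{0..i} = insert 0 {1..i}" by auto
    ultimately show ?thesis by (simp add: ck_def Gk0 algebra_simps)
  qed
  define Ht where "Ht = Abs_fps (\<lambda>i. if i < k then Hs i else 0)"
  define Dd where "Dd = fps_of_poly f - Gf * Ht"
  have Dlow: "\<forall>i<k. Dd $ i = 0"
  proof (intro allI impI)
    fix i assume ik: "i < k"
    have "(Gf * Ht) $ i = (\<Sum>j=0..i. Gk j * Hs (i - j))"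
      unfolding fps_mult_nth using ik by (intro sum.cong) (auto simp: Gf_def Ht_def)
    then show "Dd $ i = 0" unfolding Dd_def using exact[OF ik] by simp
  qed
  have Dk: "Dd $ k = ck k"
  proof -
    have "(Gf * Ht) $ k = Gf $ 0 * Ht $ k + (\<Sum>j\<in>{1..k}. Gf $ j * Ht $ (k - j))" by (rule fps_mult_split0)
    also have "\<dots> = (\<Sum>j\<in>{1..k}. Gk j * Hs (k - j))"
      by (simp add: Ht_def Gf_def)
    finally show ?thesis unfolding Dd_def ck_def by simp
  qed
  define T where "T n = fps_of_poly (h n) - Ef n * Ht" for n
  have cong: "fcong (p ^ n) (Gf * T n) (Ef n * Dd)" for n
  proof -
    have 1: "fcong (p ^ n) (Gf * fps_of_poly (h n)) (fps_of_poly (g n) * Ef n * fps_of_poly (h n))"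
      by (rule fcong_mult[OF fcong_sym[OF gE] fcong_refl])
    have 2: "fcong (p ^ n) (Ef n * (fps_of_poly (g n) * fps_of_poly (h n))) (Ef n * fps_of_poly f)"
      by (rule fcong_mult[OF fcong_refl fcong_sym[OF fcong_fac]])
    have "fps_of_poly (g n) * Ef n * fps_of_poly (h n) = Ef n * (fps_of_poly (g n) * fps_of_poly (h n))"
      by (simp add: algebra_simps)
    then have h1: "fcong (p ^ n) (Gf * fps_of_poly (h n)) (Ef n * (fps_of_poly (g n) * fps_of_poly (h n)))"
      using 1 by (simp only:)
    have 3: "fcong (p ^ n) (Gf * fps_of_poly (h n)) (Ef n * fps_of_poly f)"
      by (rule fcong_trans[OF h1 2])
    have 4: "fcong (p ^ n) (Gf * fps_of_poly (h n) - Gf * (Ef n * Ht)) (Ef n * fps_of_poly f - Ef n * (Gf * Ht))"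
      using fcong_diff[OF 3, of "Gf * (Ef n * Ht)" "Ef n * (Gf * Ht)"] by (simp add: algebra_simps)
    have "Gf * T n = Gf * fps_of_poly (h n) - Gf * (Ef n * Ht)" by (simp add: T_def algebra_simps)
    moreover have "Ef n * Dd = Ef n * fps_of_poly f - Ef n * (Gf * Ht)" by (simp add: Dd_def algebra_simps)
    ultimately show ?thesis using 4 by simp
  qed
  have Tc: "padic_compat p (\<lambda>n. T n $ i)" for i
  proof -
    have "(\<lambda>n. T n $ i) = (\<lambda>n. coeff (h n) i - (\<Sum>j\<in>{0..i}. Eseq p aa g zs j n * Ht $ (i - j)))"
      by (simp add: T_def fps_mult_nth Ef_def)
    moreover have "padic_compat p (\<lambda>n. coeff (h n) i - (\<Sum>j\<in>{0..i}. Eseq p aa g zs j n * Ht $ (i - j)))"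
      by (intro compat_diff hc compat_sum compat_mult E_compat compat_const)
    ultimately show ?thesis by simp
  qed
  have Tz: "\<forall>n. p ^ n dvd T n $ i" if "i < k" for i
    using that
  proof (induction i rule: less_induct)
    case (less i)
    show ?case
    proof
      fix n
      have c1: "p ^ (n + aa) dvd (Gf * T (n + aa)) $ i - (Ef (n + aa) * Dd) $ i"
        using cong[of "n + aa"] unfolding fcong_def by simp
      have "(Ef (n + aa) * Dd) $ i = 0" using fps_mult_low(1)[OF Dlow] less.prems by blast
      then have c2: "p ^ (n + aa) dvd (Gf * T (n + aa)) $ i" using c1 by simp
      have "\<forall>j\<in>{1..i}. p ^ (n + aa) dvd T (n + aa) $ (i - j)"
        using less.IH less.prems by auto
      then have c3: "p ^ (n + aa) dvd (\<Sum>j\<in>{1..i}. Gf $ j * T (n + aa) $ (i - j))"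
        by (rule dvd_sum_terms)
      have "(Gf * T (n + aa)) $ i = p ^ aa * T (n + aa) $ i + (\<Sum>j\<in>{1..i}. Gf $ j * T (n + aa) $ (i - j))"
        by (simp add: fps_mult_split0 Gf0)
      then have "p ^ (n + aa) dvd (p ^ aa * T (n + aa) $ i + (\<Sum>j\<in>{1..i}. Gf $ j * T (n + aa) $ (i - j))) - (\<Sum>j\<in>{1..i}. Gf $ j * T (n + aa) $ (i - j))"
        using c2 c3 by (intro dvd_diff) simp_all
      then have "p ^ (n + aa) dvd p ^ aa * T (n + aa) $ i" by simp
      then have c4: "p ^ n dvd T (n + aa) $ i" using dvd_cancel_pow p0 by blast
      have "p ^ n dvd T (n + aa) $ i - T n $ i" using compatD[OF Tc, of n "n + aa"] by simp
      with c4 have "p ^ n dvd T (n + aa) $ i - (T (n + aa) $ i - T n $ i)" by (rule dvd_diff)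
      then show "p ^ n dvd T n $ i" by simp
    qed
  qed
  have c1: "p ^ aa dvd (Gf * T aa) $ k - (Ef aa * Dd) $ k"
    using cong[of aa] unfolding fcong_def by simp
  have "(Ef aa * Dd) $ k = zs aa * ck k"
    using fps_mult_low(2)[OF Dlow] Dk by (simp add: Ef_def E0)
  moreover have "\<forall>j\<in>{1..k}. p ^ aa dvd T aa $ (k - j)" using Tz by auto
  then have c3: "p ^ aa dvd (\<Sum>j\<in>{1..k}. Gf $ j * T aa $ (k - j))" by (rule dvd_sum_terms)
  moreover have "(Gf * T aa) $ k = p ^ aa * T aa $ k + (\<Sum>j\<in>{1..k}. Gf $ j * T aa $ (k - j))"
    by (simp add: fps_mult_split0 Gf0)
  ultimately have "p ^ aa dvd p ^ aa * T aa $ k + (\<Sum>j\<in>{1..k}. Gf $ j * T aa $ (k - j)) - zs aa * ck k"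
    using c1 by simp
  then have "p ^ aa dvd p ^ aa * T aa $ k + (\<Sum>j\<in>{1..k}. Gf $ j * T aa $ (k - j)) - (p ^ aa * T aa $ k + (\<Sum>j\<in>{1..k}. Gf $ j * T aa $ (k - j)) - zs aa * ck k)"
    by (rule dvd_diff[OF dvd_add[OF dvd_triv_left c3]])
  then have c5: "p ^ aa dvd zs aa * ck k" by simp
  have "ck k = ck k * (1 - ws aa * zs aa) + ws aa * (zs aa * ck k)" by (simp add: algebra_simps)
  moreover have "p ^ aa dvd ck k * (1 - ws aa * zs aa) + ws aa * (zs aa * ck k)"
  proof (rule dvd_add)
    have "p ^ aa dvd - (ws aa * zs aa - 1)" using zs(2)[of aa] by (simp only: dvd_minus_iff)
    then show "p ^ aa dvd ck k * (1 - ws aa * zs aa)" by (simp add: dvd_mult)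
    show "p ^ aa dvd ws aa * (zs aa * ck k)" using c5 by (rule dvd_mult)
  qed
  ultimately show ?case by simp
qed


lemma pow_pos_nonunit: "1 \<le> k \<Longrightarrow> \<not> p ^ k * c dvd 1"
proof
  assume k: "1 \<le> k" and d: "p ^ k * c dvd 1"
  have "p ^ k * c = p * (p ^ (k - 1) * c)" using k by (simp add: power_eq_if)
  then have "p dvd p ^ k * c" by (rule dvdI)
  then have "p dvd 1" using d by (rule dvd_trans)
  then show False using pnu by blast
qed

lemma C2_reducible: "\<exists>G H. fps_of_poly f = G * H \<and> \<not> G dvd 1 \<and> \<not> H dvd 1"
proof -
  define Hf where "Hf = Abs_fps Hs"
  have "fps_of_poly f $ k = (Gf * Hf) $ k" for k
  proof -
    have "(Gf * Hf) $ k = p ^ aa * Hs k + (\<Sum>j\<in>{1..k}. Gk j * Hs (k - j))"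
      by (simp add: fps_mult_split0 Gf0 Hf_def Gf_def Gk0)
    also have "\<dots> = ck k + (\<Sum>j\<in>{1..k}. Gk j * Hs (k - j))" using Hs_eq[OF ck_dvd] by simp
    finally show ?thesis by (simp add: ck_def)
  qed
  then have eq: "fps_of_poly f = Gf * Hf" by (intro fps_ext)
  have "\<not> Gf dvd 1" unfolding fps_unit_iff Gf0 using pow_pos_nonunit[OF aa_pos, of 1] by simp
  moreover have "\<not> Hf dvd 1"
  proof -
    have "ck 0 = p ^ aa * Hs 0" using Hs_eq[OF ck_dvd] .
    moreover have "ck 0 = p ^ aa * (p ^ (m - aa) * u)"
      using aa_less by (simp add: ck_def f0 mult.assoc[symmetric] power_add[symmetric])
    ultimately have "Hs 0 = p ^ (m - aa) * u" using p0 by simp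
    moreover have "1 \<le> m - aa" using aa_less by simp
    ultimately show ?thesis unfolding fps_unit_iff Hf_def using pow_pos_nonunit by simp
  qed
  ultimately show ?thesis using eq by blast
qed

end


lemma fps_exact_quot:
  fixes W :: "'a::comm_ring_1 fps"
  assumes "fcong q W 0"
  shows "\<exists>W'. W = fps_const q * W'"
proof -
  have ex: "\<exists>c. W $ i = q * c" for i using assms unfolding fcong_def by (auto elim: dvdE)
  define W' where "W' = Abs_fps (\<lambda>i. SOME c. W $ i = q * c)"
  have "W $ i = (fps_const q * W') $ i" for i unfolding W'_def using someI_ex[OF ex[of i]] by simp
  then show ?thesis by (intro exI[of _ W'] fps_ext) simp
qed

lemma fcong_cancel:
  fixes W :: "'a::idom fps"
  assumes "p \<noteq> 0" "fcong (p ^ n * q) (fps_const (p ^ n) * W) 0"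
  shows "fcong q W 0"
  using assms unfolding fcong_def by (simp add: dvd_mult_cancel_left)

lemma fcong_X_shift:
  fixes W :: "'a::comm_ring_1 fps"
  assumes "fcong q (fps_X ^ e * W) R" "\<forall>i\<ge>e. R $ i = 0"
  shows "fcong q W 0"
  unfolding fcong_def
proof
  fix j
  have "q dvd (fps_X ^ e * W - R) $ (j + e)" using assms(1) unfolding fcong_def by blast
  then show "q dvd (W - 0) $ j" using assms(2) by (simp add: fps_X_power_mult_nth)
qed

lemma uniq:
  fixes D W R :: "'a::idom fps"
  assumes p0: "p \<noteq> 0" and Dc: "fcong p D (fps_X ^ e)" and Rz: "\<forall>i\<ge>e. R $ i = 0"
    and c: "fcong (p ^ n) (D * W) R"
  shows "fcong (p ^ n) W 0 \<and> fcong (p ^ n) R 0"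
  using Rz c
proof (induction n arbitrary: W R)
  case 0 then show ?case by simp
next
  case (Suc n)
  have "fcong (p ^ n) (D * W) R" using Suc.prems(2) by (rule fcong_dvd[rotated]) (simp add: le_imp_power_dvd)
  then have ih: "fcong (p ^ n) W 0" "fcong (p ^ n) R 0" using Suc.IH Suc.prems(1) by blast+
  obtain W' where W': "W = fps_const (p ^ n) * W'" using fps_exact_quot[OF ih(1)] by blast
  obtain R' where R': "R = fps_const (p ^ n) * R'" using fps_exact_quot[OF ih(2)] by blast
  have R'z: "\<forall>i\<ge>e. R' $ i = 0" using Suc.prems(1) p0 unfolding R' by simp
  have eqx: "D * W - R = fps_const (p ^ n) * (D * W' - R')" unfolding W' R' by (simp add: algebra_simps)
  have "fcong (p ^ Suc n) (D * W - R) 0" using Suc.prems(2) by (simp only: fcong_eq_diff[symmetric])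
  then have "fcong (p ^ n * p) (fps_const (p ^ n) * (D * W' - R')) 0"
    by (simp only: eqx power_Suc2)
  then have 1: "fcong p (D * W' - R') 0" using fcong_cancel p0 by blast
  have 2: "fcong p (fps_X ^ e * W') (D * W')" by (rule fcong_mult[OF fcong_sym[OF Dc] fcong_refl])
  have "fcong p (fps_X ^ e * W') R'"
    using fcong_trans[OF 2 1[unfolded fcong_eq_diff[symmetric]]] .
  then have 3: "fcong p W' 0" using R'z by (rule fcong_X_shift)
  have "fcong p (D * W') (D * 0)" using fcong_mult[OF fcong_refl 3] .
  then have 4: "fcong p (D * W') 0" by simp
  have 5: "fcong p (D * W') R'" using 1 by (simp only: fcong_eq_diff[symmetric])
  have "fcong p R' 0" by (rule fcong_trans[OF fcong_sym[OF 5] 4])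
  then show ?case using 3 unfolding W' R' fcong_def by (simp add: mult_dvd_mono)
qed


lemma approx_inv:
  fixes U :: "'a::idom fps"
  assumes pid: "pid_ring TYPE('a)" and p: "prime_elem p" and U: "\<not> p dvd U $ 0"
  shows "\<exists>V. fcong p (U * V) 1"
proof -
  obtain s t where st: "s * p ^ 1 + t * U $ 0 = 1" using prime_coprime_pow[OF pid p U] by blast
  define U1 where "U1 = U * fps_const t + fps_const (s * p)"
  have U10: "U1 $ 0 * 1 = 1" unfolding U1_def using st by (simp add: algebra_simps)
  define V1 where "V1 = fps_right_inverse U1 1"
  have inv: "U1 * V1 = 1" unfolding V1_def using U10 by (rule fps_right_inverse)
  have "U * (fps_const t * V1) = 1 - fps_const p * (fps_const s * V1)"
  proof -
    have "U * (fps_const t * V1) = (U1 - fps_const (s * p)) * V1" unfolding U1_def by (simp add: algebra_simps)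
    also have "\<dots> = U1 * V1 - fps_const (s * p) * V1" by (simp add: algebra_simps)
    also have "\<dots> = 1 - fps_const (s * p) * V1" using inv by simp
    also have "fps_const (s * p) * V1 = fps_const p * (fps_const s * V1)" by (simp add: fps_eq_iff algebra_simps)
    finally show ?thesis .
  qed
  moreover have "fcong p (1 - fps_const p * (fps_const s * V1)) 1"
    unfolding fcong_def by simp
  ultimately show ?thesis by (intro exI[of _ "fps_const t * V1"]) simp
qed

lemma fps_lowhigh:
  fixes Z :: "'a::comm_ring_1 fps"
  shows "Z = fps_of_poly (\<Sum>i<d. monom (Z $ i) i) + fps_X ^ d * fps_shift d Z"
proof (rule fps_ext)
  fix j
  show "Z $ j = (fps_of_poly (\<Sum>i<d. monom (Z $ i) i) + fps_X ^ d * fps_shift d Z) $ j"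
    by (cases "j < d") (simp_all add: fps_X_power_mult_nth coeff_sum)
qed

lemma coeff_low_poly: "coeff (\<Sum>i<d. monom (c i) i) j = (if j < d then c j else 0)"
  by (simp add: coeff_sum)

lemma degree_low_poly: "degree (\<Sum>i<d. monom (c i) i) \<le> d"
  by (rule degree_le) (simp add: coeff_low_poly)

definition "prep_inv p d e A P U \<longleftrightarrow> degree P \<le> d \<and> coeff P d = 1 \<and>
   fcong p (fps_of_poly P) (fps_X ^ d) \<and> \<not> p dvd U $ 0 \<and> fcong (p ^ e) A (U * fps_of_poly P)"

lemma prep_step:
  fixes A U :: "'a::idom fps" and P :: "'a poly"
  assumes pid: "pid_ring TYPE('a)" and p: "prime_elem p" and e: "1 \<le> e"
    and inv: "prep_inv p d e A P U"
  shows "\<exists>P' U'. prep_inv p d (Suc e) A P' U' \<and> fcong (p ^ e) (fps_of_poly P') (fps_of_poly P)"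
proof -
  note I = inv[unfolded prep_inv_def]
  have "fcong (p ^ e) (A - U * fps_of_poly P) 0" using I by (simp only: fcong_eq_diff[symmetric])
  then obtain E where E: "A - U * fps_of_poly P = fps_const (p ^ e) * E" using fps_exact_quot by blast
  obtain V where V: "fcong p (U * V) 1" using approx_inv[OF pid p] I by blast
  define Z where "Z = V * E"
  define q where "q = (\<Sum>i<d. monom (Z $ i) i)"
  define Zh where "Zh = fps_shift d Z"
  define u where "u = U * Zh"
  define P' where "P' = P + smult (p ^ e) q"
  define U' where "U' = U + fps_const (p ^ e) * u"
  have Zsplit: "Z = fps_of_poly q + fps_X ^ d * Zh" unfolding q_def Zh_def by (rule fps_lowhigh)
  have fP': "fps_of_poly P' = fps_of_poly P + fps_const (p ^ e) * fps_of_poly q"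
    unfolding P'_def by (simp add: fps_of_poly_add fps_of_poly_smult)
  have key: "A - U' * fps_of_poly P' = fps_const (p ^ e) * (E - u * fps_of_poly P - U * fps_of_poly q)
      - fps_const (p ^ e) * fps_const (p ^ e) * (u * fps_of_poly q)"
  proof -
    have "A = U * fps_of_poly P + fps_const (p ^ e) * E" using E by (simp add: algebra_simps)
    then show ?thesis unfolding fP' U'_def by (simp add: algebra_simps)
  qed
  have c1: "fcong p (u * fps_of_poly P) (u * fps_X ^ d)" using I by (intro fcong_mult fcong_refl) simp
  have "E - u * fps_X ^ d - U * fps_of_poly q = E - U * Z"
    unfolding Zsplit u_def by (simp add: algebra_simps)
  also have "\<dots> = E - (U * V) * E" unfolding Z_def by (simp add: algebra_simps)
  finally have c2: "E - u * fps_X ^ d - U * fps_of_poly q = E - (U * V) * E" .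
  have c3: "fcong p (E - (U * V) * E) (E - 1 * E)" by (intro fcong_diff fcong_refl fcong_mult V)
  have "fcong p (E - u * fps_of_poly P - U * fps_of_poly q) (E - u * fps_X ^ d - U * fps_of_poly q)"
    by (intro fcong_diff fcong_refl c1)
  then have "fcong p (E - u * fps_of_poly P - U * fps_of_poly q) 0"
    using fcong_trans[OF _ c3] c2 by simp
  then have t1: "fcong (p ^ e * p) (fps_const (p ^ e) * (E - u * fps_of_poly P - U * fps_of_poly q)) 0"
    by (rule fcong_scale)
  have t2: "fcong (p ^ e * p) (fps_const (p ^ e) * fps_const (p ^ e) * (u * fps_of_poly q)) 0"
  proof -
    have "p ^ e * p dvd p ^ e * p ^ e" using e by (intro mult_dvd_mono dvd_refl) (simp add: dvd_power)
    then have "p ^ e * p dvd (p ^ e * p ^ e) * (u * fps_of_poly q) $ i" for i by (rule dvd_mult2)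
    then show ?thesis unfolding fcong_def by (simp add: mult.assoc)
  qed
  have A1: "fcong (p ^ Suc e) A (U' * fps_of_poly P')"
  proof -
    have "fcong (p ^ e * p) (A - U' * fps_of_poly P') 0" unfolding key using fcong_diff[OF t1 t2] by simp
    then show ?thesis by (simp only: fcong_eq_diff[symmetric] power_Suc2)
  qed
  have dq: "degree (smult (p ^ e) q) \<le> d" unfolding q_def
    by (rule order_trans[OF degree_smult_le degree_low_poly])
  have A2: "degree P' \<le> d" unfolding P'_def using I dq by (intro degree_add_le) auto
  have A3: "coeff P' d = 1" unfolding P'_def q_def using I by (simp add: coeff_low_poly)
  have pe: "fcong (p ^ e) (fps_of_poly P') (fps_of_poly P)"
    unfolding fP' fcong_def by simp
  have A4: "fcong p (fps_of_poly P') (fps_X ^ d)"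
    using fcong_trans[OF fcong_dvd[OF _ pe] conjunct1[OF conjunct2[OF conjunct2[OF I]]]] e
    by (simp add: dvd_power)
  have A5: "\<not> p dvd U' $ 0"
  proof
    assume "p dvd U' $ 0"
    moreover have "p dvd p ^ e * u $ 0" using e by (simp add: dvd_power dvd_mult2)
    ultimately have "p dvd U' $ 0 - p ^ e * u $ 0" by (rule dvd_diff)
    then show False using I unfolding U'_def by simp
  qed
  show ?thesis unfolding prep_inv_def using A1 A2 A3 A4 A5 pe by blast
qed


lemma content_decomp:
  fixes A :: "'a::idom fps"
  assumes pid: "pid_ring TYPE('a)" and p: "prime_elem p" and A: "A \<noteq> 0"
  shows "\<exists>k A'. A = fps_const (p ^ k) * A' \<and> (\<exists>i. \<not> p dvd A' $ i)"
proof -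
  obtain i0 where i0: "A $ i0 \<noteq> 0" using A by (metis fps_nonzero_nth)
  have pnu: "\<not> p dvd 1" using p by (simp add: prime_elem_def)
  obtain k0 where k0: "\<not> p ^ k0 dvd A $ i0" using finite_mult[OF pid i0 pnu] by blast
  then have "k0 \<noteq> 0" by (intro notI) simp
  then obtain k1 where "k0 = Suc k1" by (cases k0) auto
  then have ex: "\<exists>i. \<not> p ^ Suc k1 dvd A $ i" using k0 by blast
  define K where "K = (LEAST k. \<exists>i. \<not> p ^ Suc k dvd A $ i)"
  have K1: "\<exists>i. \<not> p ^ Suc K dvd A $ i" unfolding K_def by (rule LeastI[of _ k1]) (rule ex)
  have K2: "p ^ K dvd A $ i" for i
  proof (cases K)
    case 0 then show ?thesis by simp
  next
    case (Suc K')
    then have "K' < K" by simp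
    then have "\<not> (\<exists>i. \<not> p ^ Suc K' dvd A $ i)" unfolding K_def by (rule not_less_Least)
    then show ?thesis using Suc by blast
  qed
  have "fcong (p ^ K) A 0" unfolding fcong_def using K2 by simp
  then obtain A' where A': "A = fps_const (p ^ K) * A'" using fps_exact_quot by blast
  obtain i where i: "\<not> p ^ Suc K dvd A $ i" using K1 by blast
  have "\<not> p dvd A' $ i"
  proof
    assume "p dvd A' $ i"
    then have "p ^ K * p dvd p ^ K * A' $ i" by (rule mult_dvd_mono[OF dvd_refl])
    then show False using i A' by (simp add: power_Suc2)
  qed
  then show ?thesis using A' by blast
qed

lemma fps_X_power_mult_shift:
  fixes A :: "'a::comm_ring_1 fps"
  shows "(fps_shift d A * fps_X ^ d) $ i = (if i < d then 0 else A $ i)"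
  by (simp add: mult.commute[of "fps_shift d A"] fps_X_power_mult_nth)

lemma prep_base:
  fixes A :: "'a::idom fps"
  assumes "\<not> p dvd A $ d" "\<forall>i<d. p dvd A $ i"
  shows "prep_inv p d 1 A (monom 1 d) (fps_shift d A)"
proof -
  have "fcong p A (fps_shift d A * fps_X ^ d)"
    unfolding fcong_def using assms(2) by (simp add: fps_X_power_mult_shift)
  then show ?thesis unfolding prep_inv_def using assms(1)
    by (simp add: degree_monom_eq fps_of_poly_monom)
qed

lemma prep_seq:
  fixes A :: "'a::idom fps"
  assumes pid: "pid_ring TYPE('a)" and p: "prime_elem p"
    and nd: "\<not> p dvd A $ d" and low: "\<forall>i<d. p dvd A $ i"
  shows "\<exists>P U. (\<forall>n. prep_inv p d (Suc n) A (P n) (U n)) \<and>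
           (\<forall>n m. n \<le> m \<longrightarrow> fcong (p ^ n) (fps_of_poly (P m)) (fps_of_poly (P n)))"
proof -
  define st where "st n PU = (SOME PU'. prep_inv p d (Suc (Suc n)) A (fst PU') (snd PU')
      \<and> fcong (p ^ Suc n) (fps_of_poly (fst PU')) (fps_of_poly (fst PU)))" for n and PU :: "'a poly \<times> 'a fps"
  define PU where "PU = rec_nat (monom 1 d, fps_shift d A) st"
  have PU0: "PU 0 = (monom 1 d, fps_shift d A)" and PUS: "PU (Suc n) = st n (PU n)" for n
    by (simp_all add: PU_def)
  have stp: "prep_inv p d (Suc (Suc n)) A (fst (st n X)) (snd (st n X))
      \<and> fcong (p ^ Suc n) (fps_of_poly (fst (st n X))) (fps_of_poly (fst X))"
    if h: "prep_inv p d (Suc n) A (fst X) (snd X)" for n X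
  proof -
    have "\<exists>P' U'. prep_inv p d (Suc (Suc n)) A P' U' \<and> fcong (p ^ Suc n) (fps_of_poly P') (fps_of_poly (fst X))"
      using prep_step[OF pid p _ h] by simp
    then obtain P' U' where "prep_inv p d (Suc (Suc n)) A P' U' \<and> fcong (p ^ Suc n) (fps_of_poly P') (fps_of_poly (fst X))"
      by blast
    then have ex: "\<exists>PU'. prep_inv p d (Suc (Suc n)) A (fst PU') (snd PU')
      \<and> fcong (p ^ Suc n) (fps_of_poly (fst PU')) (fps_of_poly (fst X))"
      by (intro exI[of _ "(P', U')"]) simp
    show ?thesis unfolding st_def by (rule someI_ex[OF ex])
  qed
  have inv: "prep_inv p d (Suc n) A (fst (PU n)) (snd (PU n))" for n
  proof (induction n)
    case 0 then show ?case using prep_base[OF nd low] by (simp add: PU0)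
  next
    case (Suc n) then show ?case using stp[OF Suc] by (simp add: PUS)
  qed
  have step: "fcong (p ^ Suc n) (fps_of_poly (fst (PU (Suc n)))) (fps_of_poly (fst (PU n)))" for n
    using stp[OF inv[of n]] by (simp add: PUS)
  have comp: "fcong (p ^ n) (fps_of_poly (fst (PU m))) (fps_of_poly (fst (PU n)))" if "n \<le> m" for n m
    using that
  proof (induction m)
    case 0 then show ?case by simp
  next
    case (Suc m)
    show ?case
    proof (cases "n = Suc m")
      case True then show ?thesis by simp
    next
      case False
      then have "n \<le> m" using Suc.prems by simp
      then have "fcong (p ^ n) (fps_of_poly (fst (PU m))) (fps_of_poly (fst (PU n)))" using Suc.IH by blast
      moreover have "fcong (p ^ n) (fps_of_poly (fst (PU (Suc m)))) (fps_of_poly (fst (PU m)))"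
        using \<open>n \<le> m\<close> by (intro fcong_dvd[OF _ step[of m]]) (simp add: le_imp_power_dvd)
      ultimately show ?thesis by (rule fcong_trans[rotated])
    qed
  qed
  show ?thesis
    by (rule exI[of _ "\<lambda>n. fst (PU n)"], rule exI[of _ "\<lambda>n. snd (PU n)"]) (use inv comp in auto)
qed

lemma monic_div:
  fixes D f :: "'a::idom poly"
  assumes "lead_coeff D = 1"
  shows "\<exists>S R. f = D * S + R \<and> (\<forall>i\<ge>degree D. coeff R i = 0) \<and> degree S \<le> degree f"
proof -
  have D0: "D \<noteq> 0" using assms by auto
  obtain S R where SR: "pseudo_divmod f D = (S, R)" by (cases "pseudo_divmod f D") auto
  have eq: "f = D * S + R" using pseudo_divmod(1)[OF D0 SR] assms by simp
  have r: "R = 0 \<or> degree R < degree D" using pseudo_divmod(2)[OF D0 SR] .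
  have Rz: "\<forall>i\<ge>degree D. coeff R i = 0"
    using r by (auto intro: coeff_eq_0)
  have "degree S \<le> degree f"
  proof (cases "S = 0")
    case True then show ?thesis by simp
  next
    case False
    have dDS: "degree (D * S) = degree D + degree S" using degree_mult_eq[OF D0 False] .
    show ?thesis
    proof (cases "R = 0")
      case True then show ?thesis using eq dDS by simp
    next
      case False
      then have "degree R < degree (D * S)" using r dDS by simp
      then have "degree (D * S + R) = degree (D * S)" by (rule degree_add_eq_left)
      then show ?thesis using eq dDS by simp
    qed
  qed
  then show ?thesis using eq Rz by blast
qed


lemma side:
  fixes A :: "'a::idom fps"
  assumes pid: "pid_ring TYPE('a)" and p: "prime_elem p" and A: "A \<noteq> 0" and pA: "p dvd A $ 0"
  shows "\<exists>k d A' P U. A = fps_const (p ^ k) * A' \<and> (\<forall>n. prep_inv p d (Suc n) A' (P n) (U n)) \<and>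
     (\<forall>n m. n \<le> m \<longrightarrow> fcong (p ^ n) (fps_of_poly (P m)) (fps_of_poly (P n))) \<and>
     (\<forall>n. p dvd p ^ k * coeff (P n) 0)"
proof -
  obtain k A' i where kA: "A = fps_const (p ^ k) * A'" and i: "\<not> p dvd A' $ i"
    using content_decomp[OF pid p A] by blast
  define d where "d = (LEAST i. \<not> p dvd A' $ i)"
  have nd: "\<not> p dvd A' $ d" unfolding d_def by (rule LeastI[of _ i]) (rule i)
  have low: "\<forall>j<d. p dvd A' $ j" unfolding d_def using not_less_Least by blast
  obtain P U where PU: "\<forall>n. prep_inv p d (Suc n) A' (P n) (U n)"
     "\<forall>n m. n \<le> m \<longrightarrow> fcong (p ^ n) (fps_of_poly (P m)) (fps_of_poly (P n))"
    using prep_seq[OF pid p nd low] by blast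
  have c0: "p dvd p ^ k * coeff (P n) 0" for n
  proof (cases k)
    case (Suc k') then show ?thesis by (simp add: dvd_mult2)
  next
    case 0
    then have "A' = A" using kA by simp
    have "d \<noteq> 0"
    proof
      assume "d = 0" then show False using nd pA \<open>A' = A\<close> by simp
    qed
    have "fcong p (fps_of_poly (P n)) (fps_X ^ d)" using PU(1) unfolding prep_inv_def by blast
    then have "p dvd (fps_of_poly (P n) - fps_X ^ d) $ 0" unfolding fcong_def by blast
    then have "p dvd coeff (P n) 0" using \<open>d \<noteq> 0\<close> by simp
    then show ?thesis by (rule dvd_mult)
  qed
  show ?thesis using kA PU c0 by blast
qed

lemma compat_of_fcong:
  assumes "\<forall>n m. n \<le> m \<longrightarrow> fcong (p ^ n) (fps_of_poly (G m)) (fps_of_poly (G n))"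
  shows "padic_compat p (\<lambda>n. coeff (G n) i)"
  using assms unfolding padic_compat_def fcong_def by simp

lemma prep_deg:
  assumes "prep_inv p d e A P U"
  shows "degree P = d" "lead_coeff P = 1"
proof -
  have "degree P \<le> d" "coeff P d = 1" using assms unfolding prep_inv_def by auto
  moreover from this have "d \<le> degree P" by (intro le_degree) simp
  ultimately show "degree P = d" "lead_coeff P = 1" by auto
qed

lemma C1:
  fixes f :: "'a::idom poly" and A B :: "'a fps"
  assumes pid: "pid_ring TYPE('a)" and p: "prime_elem p" and FAB: "fps_of_poly f = A * B"
    and pA: "p dvd A $ 0" and pB: "p dvd B $ 0" and f0: "coeff f 0 \<noteq> 0"
  shows "\<exists>g h. padic_poly p g \<and> padic_poly p h \<and> padic_poly_factors p f g h \<and>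
     p dvd coeff (g 1) 0 \<and> p dvd coeff (h 1) 0"
proof -
  have p0: "p \<noteq> 0" using p by (simp add: prime_elem_def)
  have "coeff f 0 = fps_of_poly f $ 0" by simp
  also have "\<dots> = A $ 0 * B $ 0" unfolding FAB by simp
  finally have "A $ 0 * B $ 0 = coeff f 0" by simp
  then have A0: "A \<noteq> 0" and B0: "B \<noteq> 0" using f0 by auto
  obtain kA dA A' PA UA where SA: "A = fps_const (p ^ kA) * A'" "\<forall>n. prep_inv p dA (Suc n) A' (PA n) (UA n)"
     "\<forall>n m. n \<le> m \<longrightarrow> fcong (p ^ n) (fps_of_poly (PA m)) (fps_of_poly (PA n))"
     "\<forall>n. p dvd p ^ kA * coeff (PA n) 0"
    using side[OF pid p A0 pA] by blast
  obtain kB dB B' PB UB where SB: "B = fps_const (p ^ kB) * B'" "\<forall>n. prep_inv p dB (Suc n) B' (PB n) (UB n)"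
     "\<forall>n m. n \<le> m \<longrightarrow> fcong (p ^ n) (fps_of_poly (PB m)) (fps_of_poly (PB n))"
     "\<forall>n. p dvd p ^ kB * coeff (PB n) 0"
    using side[OF pid p B0 pB] by blast
  define K where "K = kA + kB"
  have F: "fps_of_poly f = fps_const (p ^ K) * (A' * B')"
  proof -
    have "fps_of_poly f = (fps_const (p ^ kA) * fps_const (p ^ kB)) * (A' * B')"
      unfolding FAB SA(1) SB(1) by (simp only: mult_ac)
    also have "fps_const (p ^ kA) * fps_const (p ^ kB) = fps_const (p ^ K)"
      unfolding K_def power_add by simp
    finally show ?thesis .
  qed
  have hi: "(A' * B') $ i = 0" if "i > degree f" for i
  proof -
    have "coeff f i = 0" using that by (simp add: coeff_eq_0)
    moreover have "fps_of_poly f $ i = p ^ K * (A' * B') $ i" unfolding F by simp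
    ultimately have "p ^ K * (A' * B') $ i = 0" by simp
    then show ?thesis using p0 by simp
  qed
  define f' where "f' = (\<Sum>i<Suc (degree f). monom ((A' * B') $ i) i)"
  have ff': "fps_of_poly f' = A' * B'"
  proof (rule fps_ext)
    fix i show "fps_of_poly f' $ i = (A' * B') $ i"
      unfolding f'_def fps_of_poly_nth coeff_low_poly using hi[of i] by auto
  qed
  have feq: "f = smult (p ^ K) f'"
  proof (rule poly_eqI)
    fix i
    have "coeff f i = fps_of_poly f $ i" by simp
    also have "\<dots> = p ^ K * fps_of_poly f' $ i" unfolding F ff' by simp
    finally show "coeff f i = coeff (smult (p ^ K) f') i" by simp
  qed
  define D where "D n = PA n * PB n" for n
  have degPA: "degree (PA n) = dA" "lead_coeff (PA n) = 1" for n using prep_deg SA(2) by blast+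
  have degPB: "degree (PB n) = dB" "lead_coeff (PB n) = 1" for n using prep_deg SB(2) by blast+
  have lcD: "lead_coeff (D n) = 1" for n unfolding D_def lead_coeff_mult using degPA degPB by simp
  have degD: "degree (D n) = dA + dB" for n
  proof -
    have "PA n \<noteq> 0" "PB n \<noteq> 0" using degPA(2)[of n] degPB(2)[of n] by auto
    then show ?thesis unfolding D_def using degPA(1)[of n] degPB(1)[of n] by (simp add: degree_mult_eq)
  qed
  have Dc: "fcong p (fps_of_poly (D n)) (fps_X ^ (dA + dB))" for n
  proof -
    have "fcong p (fps_of_poly (PA n)) (fps_X ^ dA)" "fcong p (fps_of_poly (PB n)) (fps_X ^ dB)"
      using SA(2) SB(2) unfolding prep_inv_def by blast+
    then show ?thesis unfolding D_def fps_of_poly_mult power_add by (rule fcong_mult)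
  qed
  have "\<forall>n. \<exists>S R. f' = D n * S + R \<and> (\<forall>i\<ge>dA + dB. coeff R i = 0) \<and> degree S \<le> degree f'"
  proof
    fix n
    obtain S0 R0 where "f' = D n * S0 + R0" "\<forall>i\<ge>degree (D n). coeff R0 i = 0" "degree S0 \<le> degree f'"
      using monic_div[OF lcD[of n], of f'] by blast
    then show "\<exists>S R. f' = D n * S + R \<and> (\<forall>i\<ge>dA + dB. coeff R i = 0) \<and> degree S \<le> degree f'"
      using degD[of n] by auto
  qed
  then obtain S where "\<forall>n. \<exists>R. f' = D n * S n + R \<and> (\<forall>i\<ge>dA + dB. coeff R i = 0) \<and> degree (S n) \<le> degree f'"
    by (rule choice[THEN exE]) blast
  then obtain R where SR: "\<forall>n. f' = D n * S n + R n \<and> (\<forall>i\<ge>dA + dB. coeff (R n) i = 0) \<and> degree (S n) \<le> degree f'"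
    by (rule choice[THEN exE]) blast
  have Rz: "fcong (p ^ Suc n) (fps_of_poly (R n)) 0" for n
  proof -
    have cA: "fcong (p ^ Suc n) A' (UA n * fps_of_poly (PA n))" using SA(2) unfolding prep_inv_def by blast
    have cB: "fcong (p ^ Suc n) B' (UB n * fps_of_poly (PB n))" using SB(2) unfolding prep_inv_def by blast
    have "fcong (p ^ Suc n) (A' * B') ((UA n * fps_of_poly (PA n)) * (UB n * fps_of_poly (PB n)))"
      by (rule fcong_mult[OF cA cB])
    then have c1: "fcong (p ^ Suc n) (A' * B') ((UA n * UB n) * fps_of_poly (D n))"
      unfolding D_def fps_of_poly_mult by (simp add: algebra_simps)
    have c2: "fcong (p ^ Suc n) (A' * B' - fps_of_poly (D n) * fps_of_poly (S n))
        ((UA n * UB n) * fps_of_poly (D n) - fps_of_poly (D n) * fps_of_poly (S n))"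
      by (rule fcong_diff[OF c1 fcong_refl])
    have e1: "A' * B' - fps_of_poly (D n) * fps_of_poly (S n) = fps_of_poly (R n)"
    proof -
      have "fps_of_poly f' = fps_of_poly (D n * S n + R n)" using SR by simp
      then have "A' * B' = fps_of_poly (D n) * fps_of_poly (S n) + fps_of_poly (R n)"
        unfolding ff' by (simp add: fps_of_poly_add fps_of_poly_mult)
      then show ?thesis by simp
    qed
    have e2: "(UA n * UB n) * fps_of_poly (D n) - fps_of_poly (D n) * fps_of_poly (S n)
        = fps_of_poly (D n) * (UA n * UB n - fps_of_poly (S n))" by (simp add: algebra_simps)
    have "fcong (p ^ Suc n) (fps_of_poly (D n) * (UA n * UB n - fps_of_poly (S n))) (fps_of_poly (R n))"
      using fcong_sym[OF c2] unfolding e1 e2 .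
    moreover have "\<forall>i\<ge>dA + dB. fps_of_poly (R n) $ i = 0" using SR by simp
    ultimately show ?thesis using uniq[OF p0 Dc] by blast
  qed
  define g where "g n = smult (p ^ kA) (PA n)" for n
  define h where "h n = smult (p ^ kB) (PB n * S n)" for n
  have fac: "padic_poly_factors p f g h"
    unfolding padic_poly_factors_def
  proof (intro allI)
    fix n i
    have "f - g n * h n = smult (p ^ K) (R n)"
    proof -
      have "f' = D n * S n + R n" using SR by blast
      then show ?thesis unfolding feq g_def h_def D_def K_def
        by (simp add: power_add algebra_simps smult_add_right)
    qed
    moreover have "p ^ Suc n dvd coeff (R n) i" using Rz[of n] unfolding fcong_def by simp
    then have "p ^ n dvd coeff (R n) i" by (rule pow_Suc_dvd)
    ultimately show "p ^ n dvd coeff (f - g n * h n) i" by (simp add: dvd_mult)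
  qed
  have Scomp: "fcong (p ^ n) (fps_of_poly (S m)) (fps_of_poly (S n))" if nm: "n \<le> m" for n m
  proof -
    have Dnm: "fcong (p ^ n) (fps_of_poly (D m)) (fps_of_poly (D n))"
      unfolding D_def fps_of_poly_mult using SA(3) SB(3) nm by (intro fcong_mult) auto
    have t1: "fcong (p ^ n) ((fps_of_poly (D n) - fps_of_poly (D m)) * fps_of_poly (S m)) 0"
    proof -
      have "fcong (p ^ n) ((fps_of_poly (D n) - fps_of_poly (D m)) * fps_of_poly (S m))
              ((fps_of_poly (D n) - fps_of_poly (D n)) * fps_of_poly (S m))"
        by (intro fcong_mult fcong_diff fcong_refl Dnm)
      then show ?thesis by simp
    qed
    have t2: "fcong (p ^ n) (fps_of_poly (R n)) 0"
      using Rz[of n] by (rule fcong_dvd[rotated]) (simp add: le_imp_power_dvd)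
    have t3: "fcong (p ^ n) (fps_of_poly (R m)) 0"
      using Rz[of m] by (rule fcong_dvd[rotated]) (use nm in \<open>simp add: le_imp_power_dvd\<close>)
    have eqS: "fps_of_poly (D n) * (fps_of_poly (S m) - fps_of_poly (S n))
        = (fps_of_poly (D n) - fps_of_poly (D m)) * fps_of_poly (S m) + (fps_of_poly (R n) - fps_of_poly (R m))"
    proof -
      have "fps_of_poly f' = fps_of_poly (D m) * fps_of_poly (S m) + fps_of_poly (R m)"
           "fps_of_poly f' = fps_of_poly (D n) * fps_of_poly (S n) + fps_of_poly (R n)"
        using SR by (simp_all add: fps_of_poly_add[symmetric] fps_of_poly_mult[symmetric])
      then show ?thesis by (simp add: algebra_simps)
    qed
    have cg: "fcong (p ^ n) ((fps_of_poly (D n) - fps_of_poly (D m)) * fps_of_poly (S m) + (fps_of_poly (R n) - fps_of_poly (R m))) (0 + (0 - 0))"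
      by (intro fcong_add fcong_diff t1 t2 t3)
    have "fcong (p ^ n) (fps_of_poly (D n) * (fps_of_poly (S m) - fps_of_poly (S n))) 0"
      unfolding eqS using cg by (simp only: diff_zero add_0)
    then have "fcong (p ^ n) (fps_of_poly (S m) - fps_of_poly (S n)) 0"
      using uniq[OF p0 Dc, of 0] by simp
    then show ?thesis by (simp only: fcong_eq_diff[symmetric])
  qed
  have gp: "padic_poly p g"
    unfolding padic_poly_def
  proof
    have "degree (g n) \<le> dA" for n unfolding g_def using order_trans[OF degree_smult_le] degPA(1) by simp
    then show "\<exists>d. \<forall>n. degree (g n) \<le> d" by blast
    show "\<forall>i. padic_compat p (\<lambda>n. coeff (g n) i)"
    proof
      fix i
      have "fcong (p ^ n) (fps_of_poly (g m)) (fps_of_poly (g n))" if "n \<le> m" for n m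
        unfolding g_def fps_of_poly_smult using SA(3) that by (intro fcong_mult[OF fcong_refl]) blast
      then show "padic_compat p (\<lambda>n. coeff (g n) i)" by (intro compat_of_fcong) blast
    qed
  qed
  have hp: "padic_poly p h"
    unfolding padic_poly_def
  proof
    have "degree (h n) \<le> dB + degree f'" for n
    proof -
      have "degree (h n) \<le> degree (PB n * S n)" unfolding h_def by (rule degree_smult_le)
      also have "\<dots> \<le> degree (PB n) + degree (S n)" by (rule degree_mult_le)
      also have "\<dots> \<le> dB + degree f'" using degPB(1)[of n] SR by simp
      finally show ?thesis .
    qed
    then show "\<exists>d. \<forall>n. degree (h n) \<le> d" by blast
    show "\<forall>i. padic_compat p (\<lambda>n. coeff (h n) i)"
    proof
      fix i
      have "fcong (p ^ n) (fps_of_poly (h m)) (fps_of_poly (h n))" if "n \<le> m" for n m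
      proof -
        have "fcong (p ^ n) (fps_of_poly (PB m)) (fps_of_poly (PB n))" using SB(3) that by blast
        then have "fcong (p ^ n) (fps_of_poly (PB m) * fps_of_poly (S m)) (fps_of_poly (PB n) * fps_of_poly (S n))"
          using Scomp[OF that] by (rule fcong_mult)
        then show ?thesis unfolding h_def fps_of_poly_smult fps_of_poly_mult by (rule fcong_mult[OF fcong_refl])
      qed
      then show "padic_compat p (\<lambda>n. coeff (h n) i)" by (intro compat_of_fcong) blast
    qed
  qed
  have g1: "p dvd coeff (g 1) 0" unfolding g_def using SA(4) by simp
  have h1: "p dvd coeff (h 1) 0"
  proof -
    have "p dvd p ^ kB * coeff (PB 1) 0 * coeff (S 1) 0" using SB(4) by (simp add: dvd_mult2)
    then show ?thesis unfolding h_def by (simp add: coeff_mult_0 mult.assoc)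
  qed
  show ?thesis using gp hp fac g1 h1 by blast
qed


lemma fps_X_split:
  fixes F :: "'a::comm_ring_1 fps"
  assumes "F $ 0 = 0"
  shows "F = fps_X * fps_shift 1 F"
  by (rule fps_ext) (use assms in \<open>auto simp: fps_X_mult_nth\<close>)

lemma fps_X_nonunit: "\<not> (fps_X :: 'a::idom fps) dvd 1"
  unfolding fps_unit_iff by simp

lemma pow_nonunit:
  fixes p :: "'a::comm_ring_1"
  assumes "\<not> p dvd 1" "1 \<le> k"
  shows "\<not> p ^ k dvd 1"
proof
  assume d: "p ^ k dvd 1"
  have "p ^ k = p * p ^ (k - 1)" using assms(2) by (simp add: power_eq_if)
  then have "p dvd p ^ k" by (rule dvdI)
  then have "p dvd 1" using d by (rule dvd_trans)
  then show False using assms(1) by blast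
qed

lemma nonunit_const_div:
  fixes x :: "nat \<Rightarrow> 'a::idom"
  assumes pid: "pid_ring TYPE('a)" and p: "prime_elem p" and c: "padic_compat p x"
    and nu: "\<not> padic_unit p x"
  shows "p dvd x 1"
  using unit_of_nondiv[OF pid p c] nu by blast

lemma case1_irred:
  fixes f :: "'a::idom poly"
  assumes "coeff f 0 = 0" "coeff f 1 dvd 1"
  shows "irreducible (fps_of_poly f)"
proof -
  let ?F = "fps_of_poly f"
  define G where "G = fps_shift 1 ?F"
  have FG: "?F = fps_X * G" unfolding G_def by (rule fps_X_split) (simp add: assms(1))
  have Gu: "G dvd 1" unfolding fps_unit_iff G_def using assms(2) by simp
  show ?thesis
  proof (rule irreducibleI)
    show "?F \<noteq> 0"
    proof
      assume "?F = 0"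
      moreover have "coeff f 1 = ?F $ 1" by simp
      ultimately have "coeff f 1 = 0" by simp
      then show False using assms(2) by simp
    qed
    show "\<not> ?F dvd 1" unfolding fps_unit_iff using assms(1) by simp
    fix a b assume ab: "?F = a * b"
    have "?F $ 0 = (a * b) $ 0" using ab by simp
    then have "a $ 0 * b $ 0 = 0" using assms(1) by simp
    then have "a $ 0 = 0 \<or> b $ 0 = 0" by simp
    then show "a dvd 1 \<or> b dvd 1"
    proof
      assume "a $ 0 = 0"
      then have "a = fps_X * fps_shift 1 a" by (rule fps_X_split)
      then have "fps_X * G = fps_X * (fps_shift 1 a * b)" using ab FG by (simp add: mult.assoc)
      then have "G = fps_shift 1 a * b" by simp
      then have "b dvd G" by simp
      then show ?thesis using Gu dvd_trans by blast
    next
      assume "b $ 0 = 0"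
      then have "b = fps_X * fps_shift 1 b" by (rule fps_X_split)
      then have "fps_X * G = fps_X * (fps_shift 1 b * a)" using ab FG by (simp add: ac_simps)
      then have "G = fps_shift 1 b * a" by simp
      then have "a dvd G" by simp
      then show ?thesis using Gu dvd_trans by blast
    qed
  qed
qed


lemma case2_irred:
  fixes f :: "'a::idom poly"
  assumes pid: "pid_ring TYPE('a)" and p: "prime_elem p" and m: "m \<ge> 1"
    and d1: "coeff f 0 dvd p ^ m" and d2: "p ^ m dvd coeff f 0"
    and cond: "\<forall>g h. padic_poly p g \<longrightarrow> padic_poly p h \<longrightarrow> padic_poly_factors p f g h \<longrightarrow>
           padic_unit p (\<lambda>n. coeff (g n) 0) \<or> padic_unit p (\<lambda>n. coeff (h n) 0)"
  shows "irreducible (fps_of_poly f)"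
proof -
  let ?F = "fps_of_poly f"
  have pnu: "\<not> p dvd 1" using p by (simp add: prime_elem_def)
  have p0: "p \<noteq> 0" using p by (simp add: prime_elem_def)
  have f0: "coeff f 0 \<noteq> 0" using d1 p0 by auto
  have f0nu: "\<not> coeff f 0 dvd 1"
  proof
    assume "coeff f 0 dvd 1"
    then have "p ^ m dvd 1" using d2 by (rule dvd_trans[rotated])
    then show False using pow_nonunit[OF pnu m] by blast
  qed
  show ?thesis
  proof (rule irreducibleI)
    show "?F \<noteq> 0"
    proof
      assume "?F = 0"
      moreover have "coeff f 0 = ?F $ 0" by simp
      ultimately show False using f0 by simp
    qed
    show "\<not> ?F dvd 1" unfolding fps_unit_iff using f0nu by simp
    fix a b assume ab: "?F = a * b"
    show "a dvd 1 \<or> b dvd 1"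
    proof (rule ccontr)
      assume "\<not> (a dvd 1 \<or> b dvd 1)"
      then have na: "\<not> a $ 0 dvd 1" and nb: "\<not> b $ 0 dvd 1" unfolding fps_unit_iff by auto
      have "?F $ 0 = (a * b) $ 0" using ab by simp
      then have ab0: "coeff f 0 = a $ 0 * b $ 0" by simp
      have "a $ 0 dvd coeff f 0" unfolding ab0 by simp
      then have "a $ 0 dvd p ^ m" using d1 by (rule dvd_trans)
      then have pa: "p dvd a $ 0" using nonunit_dvd_prime_pow[OF pid p _ na] by blast
      have "b $ 0 dvd coeff f 0" unfolding ab0 by simp
      then have "b $ 0 dvd p ^ m" using d1 by (rule dvd_trans)
      then have pb: "p dvd b $ 0" using nonunit_dvd_prime_pow[OF pid p _ nb] by blast
      obtain g h where gh: "padic_poly p g" "padic_poly p h" "padic_poly_factors p f g h"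
        "p dvd coeff (g 1) 0" "p dvd coeff (h 1) 0"
        using C1[OF pid p ab pa pb f0] by blast
      have "\<not> padic_unit p (\<lambda>n. coeff (g n) 0)" using not_unit_dvd[OF p] gh(4) by simp
      moreover have "\<not> padic_unit p (\<lambda>n. coeff (h n) 0)" using not_unit_dvd[OF p] gh(5) by simp
      ultimately show False using cond gh(1-3) by blast
    qed
  qed
qed

lemma irred_case1:
  fixes f :: "'a::idom poly"
  assumes irr: "irreducible (fps_of_poly f)" and f0: "coeff f 0 = 0"
  shows "coeff f 1 dvd 1"
proof -
  let ?F = "fps_of_poly f"
  have "?F = fps_X * fps_shift 1 ?F" by (rule fps_X_split) (simp add: f0)
  then have "(fps_X :: 'a fps) dvd 1 \<or> fps_shift 1 ?F dvd 1" by (rule irreducibleD[OF irr])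
  then have "fps_shift 1 ?F dvd 1" using fps_X_nonunit by blast
  then show ?thesis unfolding fps_unit_iff by simp
qed

lemma irred_case2:
  fixes f :: "'a::idom poly"
  assumes pid: "pid_ring TYPE('a)" and irr: "irreducible (fps_of_poly f)" and f0: "coeff f 0 \<noteq> 0"
  shows "\<exists>p m. prime_elem p \<and> m \<ge> 1 \<and> coeff f 0 dvd p ^ m \<and> p ^ m dvd coeff f 0 \<and>
        (\<forall>g h. padic_poly p g \<longrightarrow> padic_poly p h \<longrightarrow> padic_poly_factors p f g h \<longrightarrow>
           padic_unit p (\<lambda>n. coeff (g n) 0) \<or> padic_unit p (\<lambda>n. coeff (h n) 0))"
proof -
  let ?F = "fps_of_poly f"
  let ?c = "coeff f 0"
  have cnu: "\<not> ?c dvd 1"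
  proof
    assume "?c dvd 1"
    then have "?F dvd 1" unfolding fps_unit_iff by simp
    then show False using irr by (simp add: irreducible_def)
  qed
  obtain p where p: "prime_elem p" and pc: "p dvd ?c" using prime_factor[OF pid f0 cnu] by blast
  have pnu: "\<not> p dvd 1" using p by (simp add: prime_elem_def)
  have p0: "p \<noteq> 0" using p by (simp add: prime_elem_def)
  obtain j0 where j0: "\<not> p ^ j0 dvd ?c" using finite_mult[OF pid f0 pnu] by blast
  then have "j0 \<noteq> 0" by (intro notI) simp
  then obtain j1 where "j0 = Suc j1" by (cases j0) auto
  then have ex: "\<not> p ^ Suc j1 dvd ?c" using j0 by simp
  define k where "k = (LEAST j. \<not> p ^ Suc j dvd ?c)"
  have k1: "\<not> p ^ Suc k dvd ?c" unfolding k_def by (rule LeastI[of _ j1]) (rule ex)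
  have k2: "p ^ k dvd ?c"
  proof (cases k)
    case 0 then show ?thesis by simp
  next
    case (Suc k')
    then have "k' < k" by simp
    then have "\<not> \<not> p ^ Suc k' dvd ?c" unfolding k_def by (rule not_less_Least)
    then show ?thesis using Suc by simp
  qed
  have kpos: "1 \<le> k"
  proof (rule ccontr)
    assume "\<not> 1 \<le> k" then have "k = 0" by simp
    then show False using k1 pc by simp
  qed
  obtain r where r: "?c = p ^ k * r" using k2 by (auto elim: dvdE)
  have pr: "\<not> p dvd r"
  proof
    assume "p dvd r"
    then have "p ^ k * p dvd p ^ k * r" by (rule mult_dvd_mono[OF dvd_refl])
    then show False using k1 r by (simp add: power_Suc2)
  qed
  have ru: "r dvd 1"
  proof (rule ccontr)
    assume rnu: "\<not> r dvd 1"
    obtain s t where st: "s * p ^ k + t * r = 1" using prime_coprime_pow[OF pid p pr] by blast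
    obtain G H where GH: "?F = G * H" "G $ 0 = p ^ k" "H $ 0 = r"
      using coprime_split[of ?F "p ^ k" r s t] r st by auto
    have "\<not> G dvd 1" unfolding fps_unit_iff GH(2) by (rule pow_nonunit[OF pnu kpos])
    moreover have "\<not> H dvd 1" unfolding fps_unit_iff GH(3) by (rule rnu)
    ultimately show False using irr GH(1) by (auto simp: irreducible_def)
  qed
  have d1: "?c dvd p ^ k"
  proof -
    obtain r' where r': "1 = r * r'" using ru by (auto elim: dvdE)
    have "p ^ k = p ^ k * (r * r')" unfolding r'[symmetric] by simp
    also have "\<dots> = ?c * r'" unfolding r by (simp only: mult.assoc)
    finally have "p ^ k = ?c * r'" .
    then show ?thesis by (rule dvdI)
  qed
  have cond: "padic_unit p (\<lambda>n. coeff (g n) 0) \<or> padic_unit p (\<lambda>n. coeff (h n) 0)"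
    if gh: "padic_poly p g" "padic_poly p h" "padic_poly_factors p f g h" for g h
  proof (rule ccontr)
    assume "\<not> ?thesis"
    then have ng: "\<not> padic_unit p (\<lambda>n. coeff (g n) 0)" and nh: "\<not> padic_unit p (\<lambda>n. coeff (h n) 0)" by auto
    have gc: "padic_compat p (\<lambda>n. coeff (g n) 0)" using gh(1) by (simp add: padic_poly_def)
    have hc: "padic_compat p (\<lambda>n. coeff (h n) 0)" using gh(2) by (simp add: padic_poly_def)
    have gn: "p dvd coeff (g 1) 0" using nonunit_const_div[OF pid p gc ng] by simp
    have hn: "p dvd coeff (h 1) 0" using nonunit_const_div[OF pid p hc nh] by simp
    interpret C: C2ctx p f g h k r
      by (unfold_locales) (use pid p r ru gh gn hn in auto)
    obtain G H where "?F = G * H" "\<not> G dvd 1" "\<not> H dvd 1" using C.C2_reducible by blast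
    then show False using irr by (auto simp: irreducible_def)
  qed
  show ?thesis using p kpos d1 k2 cond by blast
qed

theorem theorem1p1:
  fixes f :: "'a::idom poly"
  assumes "pid_ring TYPE('a)"
  shows "irreducible (fps_of_poly f) \<longleftrightarrow>
    ((coeff f 0 = 0 \<and> coeff f 1 dvd 1) \<or>
     (\<exists>p m. prime_elem p \<and> m \<ge> 1 \<and> coeff f 0 dvd p ^ m \<and> p ^ m dvd coeff f 0 \<and>
        (\<forall>g h. padic_poly p g \<longrightarrow> padic_poly p h \<longrightarrow> padic_poly_factors p f g h \<longrightarrow>
           padic_unit p (\<lambda>n. coeff (g n) 0) \<or> padic_unit p (\<lambda>n. coeff (h n) 0))))"
proof
  assume irr: "irreducible (fps_of_poly f)"
  show "(coeff f 0 = 0 \<and> coeff f 1 dvd 1) \<or>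
     (\<exists>p m. prime_elem p \<and> m \<ge> 1 \<and> coeff f 0 dvd p ^ m \<and> p ^ m dvd coeff f 0 \<and>
        (\<forall>g h. padic_poly p g \<longrightarrow> padic_poly p h \<longrightarrow> padic_poly_factors p f g h \<longrightarrow>
           padic_unit p (\<lambda>n. coeff (g n) 0) \<or> padic_unit p (\<lambda>n. coeff (h n) 0)))"
  proof (cases "coeff f 0 = 0")
    case True then show ?thesis using irred_case1[OF irr] by blast
  next
    case False then show ?thesis using irred_case2[OF assms irr] by blast
  qed
next
  assume "(coeff f 0 = 0 \<and> coeff f 1 dvd 1) \<or>
     (\<exists>p m. prime_elem p \<and> m \<ge> 1 \<and> coeff f 0 dvd p ^ m \<and> p ^ m dvd coeff f 0 \<and>
        (\<forall>g h. padic_poly p g \<longrightarrow> padic_poly p h \<longrightarrow> padic_poly_factors p f g h \<longrightarrow>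
           padic_unit p (\<lambda>n. coeff (g n) 0) \<or> padic_unit p (\<lambda>n. coeff (h n) 0)))"
  then show "irreducible (fps_of_poly f)"
  proof
    assume "coeff f 0 = 0 \<and> coeff f 1 dvd 1"
    then show ?thesis using case1_irred by blast
  next
    assume "\<exists>p m. prime_elem p \<and> m \<ge> 1 \<and> coeff f 0 dvd p ^ m \<and> p ^ m dvd coeff f 0 \<and>
        (\<forall>g h. padic_poly p g \<longrightarrow> padic_poly p h \<longrightarrow> padic_poly_factors p f g h \<longrightarrow>
           padic_unit p (\<lambda>n. coeff (g n) 0) \<or> padic_unit p (\<lambda>n. coeff (h n) 0))"
    then obtain p m where pm: "prime_elem p" "m \<ge> 1" "coeff f 0 dvd p ^ m" "p ^ m dvd coeff f 0"
      "\<forall>g h. padic_poly p g \<longrightarrow> padic_poly p h \<longrightarrow> padic_poly_factors p f g h \<longrightarrow>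
           padic_unit p (\<lambda>n. coeff (g n) 0) \<or> padic_unit p (\<lambda>n. coeff (h n) 0)" by blast
    show ?thesis by (rule case2_irred[OF assms pm])
  qed
qed


end
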